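(* Let $G=(V,E)$ be a tree with boundary with degree sequence $\pi$, and let $\pi'$ be another degree sequence (of some tree with boundary on $|V|$ vertices) with $\pi'\unlhd\pi$. Then there exists an SLO$^\ast$-tree $G^\ast=(V,E^\ast)$ in $\mathcal{T}_{\pi'}$ with $\lambda(G^\ast)\le\lambda(G)$.
   Context: A tree with boundary is a finite tree $G=(V,E)$ whose vertex set is partitioned into the set $\partial V$ of boundary vertices, which are exactly the vertices of degree $1$, and the set $V_0$ of interior vertices, which are exactly the vertices of degree at least $2$; both sets are nonempty. $\mathcal{T}_{\pi'}$ is the class of trees with boundary with degree sequence $\pi'$. Degree sequences of trees with $n$ vertices are written $\pi=(d_0,\dots,d_{k-1},d_k,\dots,d_{n-1})$ with $2\le d_0\le\dots\le d_{k-1}$ the interior degrees and $d_k=\dots=d_{n-1}=1$; for two such sequences $\pi$ (with $k$ interior entries) and $\pi'=(d'_0,\dots,d'_{n-1})$ (with $k'$ interior entries, possibly $k'\ne k$) on the same number $n$ of vertices, $\pi\unlhd\pi'$ means $\sum_{j\le r}d_j\le\sum_{j\le r}d'_j$ for all $0\le r<n$. The Dirichlet operator $\Delta_0$ is the principal submatrix of the Laplacian $D-A$ indexed by $V_0$; $\lambda(G)$ is its smallest eigenvalue. For a chosen root $v_0$, $h(v)=\mathrm{dist}(v,v_0)$; if $v,w$ are adjacent with $h(w)=h(v)+1$, $w$ is a child of $v$. A total order $\prec$ on $V$ is an SLO$^\ast$-ordering for root $v_0$ if: (S1) $v\prec w$ implies $h(v)\le h(w)$; (S2) if $v_1\prec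 v_2$ then every child of $v_1$ precedes every child of $v_2$; (S3) if $v\prec w$ and $v\in\partial V$ then $w\in\partial V$; (S4) for interior vertices $v\prec w$ implies $d_v\le d_w$. An SLO$^\ast$-tree is a tree with boundary admitting an SLO$^\ast$-ordering for some root. *)

theory Defs
  imports Complex_Main "HOL-Library.Multiset"
begin

definition graph :: "'a set \<Rightarrow> 'a set set \<Rightarrow> bool" where
  "graph V E \<longleftrightarrow> finite V \<and> (\<forall>e\<in>E. e \<subseteq> V \<and> card e = 2)"

definition adj :: "'a set set \<Rightarrow> 'a \<Rightarrow> 'a \<Rightarrow> bool" where
  "adj E v w \<longleftrightarrow> {v, w} \<in> E"

definition deg :: "'a set set \<Rightarrow> 'a \<Rightarrow> nat" where
  "deg E v = card {e \<in> E. v \<in> e}"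

definition walk :: "'a set set \<Rightarrow> 'a list \<Rightarrow> bool" where
  "walk E xs \<longleftrightarrow> xs \<noteq> [] \<and> (\<forall>i. Suc i < length xs \<longrightarrow> adj E (xs ! i) (xs ! Suc i))"

definition connected_graph :: "'a set \<Rightarrow> 'a set set \<Rightarrow> bool" where
  "connected_graph V E \<longleftrightarrow>
     (\<forall>v\<in>V. \<forall>w\<in>V. \<exists>xs. walk E xs \<and> hd xs = v \<and> last xs = w)"

definition has_cycle :: "'a set set \<Rightarrow> bool" where
  "has_cycle E \<longleftrightarrow> (\<exists>xs. length xs \<ge> 3 \<and> distinct xs \<and> walk E xs \<and> adj E (last xs) (hd xs))"

definition is_tree :: "'a set \<Rightarrow> 'a set set \<Rightarrow> bool" where
  "is_tree V E \<longleftrightarrow> graph V E \<and> V \<noteq> {} \<and> connected_graph V E \<and> \<not> has_cycle E"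

definition boundary :: "'a set \<Rightarrow> 'a set set \<Rightarrow> 'a set" where
  "boundary V E = {v \<in> V. deg E v = 1}"

definition interior :: "'a set \<Rightarrow> 'a set set \<Rightarrow> 'a set" where
  "interior V E = {v \<in> V. deg E v \<ge> 2}"

definition tree_with_boundary :: "'a set \<Rightarrow> 'a set set \<Rightarrow> bool" where
  "tree_with_boundary V E \<longleftrightarrow> is_tree V E \<and> V = boundary V E \<union> interior V E
     \<and> boundary V E \<noteq> {} \<and> interior V E \<noteq> {}"

definition deg_seq :: "'a set \<Rightarrow> 'a set set \<Rightarrow> nat list" where
  "deg_seq V E = sorted_list_of_multiset (image_mset (deg E) (mset_set (interior V E)))
                  @ replicate (card (boundary V E)) 1"

definition maj_le :: "nat list \<Rightarrow> nat list \<Rightarrow> bool" where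
  "maj_le p q \<longleftrightarrow> length p = length q \<and>
     (\<forall>r < length p. sum_list (take (Suc r) p) \<le> sum_list (take (Suc r) q))"

text \<open>Dirichlet operator Delta_0 (principal submatrix of D - A indexed by the interior)
  acting on real functions on the interior.\<close>
definition dirichlet_op :: "'a set \<Rightarrow> 'a set set \<Rightarrow> ('a \<Rightarrow> real) \<Rightarrow> 'a \<Rightarrow> real" where
  "dirichlet_op V E x v =
     real (deg E v) * x v - (\<Sum>w \<in> {w \<in> interior V E. adj E v w}. x w)"

definition dirichlet_eigenvalues :: "'a set \<Rightarrow> 'a set set \<Rightarrow> real set" where
  "dirichlet_eigenvalues V E = {\<mu>. \<exists>x. (\<exists>v \<in> interior V E. x v \<noteq> 0) \<and>
      (\<forall>v \<in> interior V E. dirichlet_op V E x v = \<mu> * x v)}"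

definition lambda_D :: "'a set \<Rightarrow> 'a set set \<Rightarrow> real" where
  "lambda_D V E = Min (dirichlet_eigenvalues V E)"

definition gdist :: "'a set set \<Rightarrow> 'a \<Rightarrow> 'a \<Rightarrow> nat" where
  "gdist E v w = (LEAST n. \<exists>xs. walk E xs \<and> hd xs = v \<and> last xs = w \<and> length xs = Suc n)"

definition child :: "'a set set \<Rightarrow> 'a \<Rightarrow> 'a \<Rightarrow> 'a \<Rightarrow> bool" where
  "child E v0 v w \<longleftrightarrow> adj E v w \<and> gdist E w v0 = Suc (gdist E v v0)"

text \<open>SLO*-ordering for root v0: the total order on V is given by an injective rank
  function f, with v \<prec> w iff f v < f w.\<close>
definition SLO_ordering :: "'a set \<Rightarrow> 'a set set \<Rightarrow> 'a \<Rightarrow> ('a \<Rightarrow> nat) \<Rightarrow> bool" where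
  "SLO_ordering V E v0 f \<longleftrightarrow> v0 \<in> V \<and> inj_on f V \<and>
    (\<forall>v\<in>V. \<forall>w\<in>V. f v < f w \<longrightarrow> gdist E v v0 \<le> gdist E w v0) \<and>
    (\<forall>v1\<in>V. \<forall>v2\<in>V. f v1 < f v2 \<longrightarrow>
        (\<forall>w1\<in>V. \<forall>w2\<in>V. child E v0 v1 w1 \<longrightarrow> child E v0 v2 w2 \<longrightarrow> f w1 < f w2)) \<and>
    (\<forall>v\<in>V. \<forall>w\<in>V. f v < f w \<longrightarrow> v \<in> boundary V E \<longrightarrow> w \<in> boundary V E) \<and>
    (\<forall>v\<in>interior V E. \<forall>w\<in>interior V E. f v < f w \<longrightarrow> deg E v \<le> deg E w)"

definition SLO_tree :: "'a set \<Rightarrow> 'a set set \<Rightarrow> bool" where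
  "SLO_tree V E \<longleftrightarrow> tree_with_boundary V E \<and> (\<exists>v0 f. SLO_ordering V E v0 f)"

end

theory Submission
  imports Defs "HOL-Analysis.Analysis" "HOL-Library.Function_Algebras"
begin

interpretation fvs: vector_space "(\<lambda>c (f::'x \<Rightarrow> real) y. c * f y)"
  by unfold_locales (auto simp: fun_eq_iff algebra_simps)



lemma adj_sym: "adj E v w = adj E w v"
  by (simp add: adj_def insert_commute)

lemma adj_in_V: "graph V E \<Longrightarrow> adj E v w \<Longrightarrow> v \<in> V \<and> w \<in> V \<and> v \<noteq> w"
proof -
  assume a: "graph V E" "adj E v w"
  then have "{v,w} \<subseteq> V" "card {v,w} = 2" by (auto simp: graph_def adj_def)
  then show ?thesis by (cases "v = w") auto
qed

lemma walk_single[simp]: "walk E [v]"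
  by (simp add: walk_def)

lemma walk_Cons: "walk E (v # xs) \<longleftrightarrow> (xs = [] \<or> (walk E xs \<and> adj E v (hd xs)))"
proof
  assume w: "walk E (v # xs)"
  show "xs = [] \<or> (walk E xs \<and> adj E v (hd xs))"
  proof (cases xs)
    case Nil then show ?thesis by simp
  next
    case (Cons y ys)
    have 1: "adj E v (hd xs)" using w[unfolded walk_def, THEN conjunct2, rule_format, of 0] Cons by simp
    have "walk E xs" unfolding walk_def
    proof (intro conjI allI impI)
      show "xs \<noteq> []" using Cons by simp
      fix i assume "Suc i < length xs"
      then show "adj E (xs ! i) (xs ! Suc i)"
        using w[unfolded walk_def, THEN conjunct2, rule_format, of "Suc i"] by simp
    qed
    then show ?thesis using 1 by simp
  qed
next
  assume a: "xs = [] \<or> (walk E xs \<and> adj E v (hd xs))"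
  show "walk E (v # xs)" unfolding walk_def
  proof (intro conjI allI impI)
    fix i assume i: "Suc i < length (v # xs)"
    show "adj E ((v # xs) ! i) ((v # xs) ! Suc i)"
    proof (cases i)
      case 0 then show ?thesis using a i by (cases xs) auto
    next
      case (Suc j) then show ?thesis using a i unfolding walk_def by auto
    qed
  qed simp
qed

lemma walk_append: "walk E xs \<Longrightarrow> walk E ys \<Longrightarrow> adj E (last xs) (hd ys) \<Longrightarrow> walk E (xs @ ys)"
proof (induction xs)
  case Nil then show ?case by (simp add: walk_def)
next
  case (Cons x xs)
  show ?case
  proof (cases xs)
    case Nil then show ?thesis using Cons.prems by (simp add: walk_Cons)
  next
    case (Cons y zs)
    then show ?thesis using Cons.prems Cons.IH by (auto simp: walk_Cons)
  qed
qed

lemma walk_rev: "walk E xs \<Longrightarrow> walk E (rev xs)"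
proof (induction xs)
  case Nil then show ?case by (simp add: walk_def)
next
  case (Cons x xs)
  show ?case
  proof (cases xs)
    case Nil then show ?thesis by simp
  next
    case (Cons y zs)
    then have w: "walk E (rev xs)" "adj E x (hd xs)" using Cons.prems Cons.IH by (auto simp: walk_Cons)
    have "walk E (rev xs @ [x])"
      by (rule walk_append[OF w(1)]) (use w(2) Cons in \<open>auto simp: adj_sym last_rev\<close>)
    then show ?thesis by simp
  qed
qed

lemma walk_tl: "walk E xs \<Longrightarrow> tl xs \<noteq> [] \<Longrightarrow> walk E (tl xs)"
  by (cases xs) (auto simp: walk_Cons)

lemma walk_nthI: "xs \<noteq> [] \<Longrightarrow> (\<And>i. Suc i < length xs \<Longrightarrow> adj E (xs ! i) (xs ! Suc i)) \<Longrightarrow> walk E xs"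
  by (simp add: walk_def)

locale conn =
  fixes V :: "'a set" and E :: "'a set set"
  assumes gr: "graph V E" and cn: "connected_graph V E"
begin

lemma gd_ex: assumes "v \<in> V" "w \<in> V"
  shows "\<exists>xs. walk E xs \<and> hd xs = v \<and> last xs = w \<and> length xs = Suc (gdist E v w)"
proof -
  obtain xs where xs: "walk E xs" "hd xs = v" "last xs = w"
    using cn assms unfolding connected_graph_def by blast
  then have "length xs = Suc (length xs - 1)" by (cases xs) (auto simp: walk_def)
  then have "\<exists>n. \<exists>xs. walk E xs \<and> hd xs = v \<and> last xs = w \<and> length xs = Suc n" using xs by blast
  from LeastI_ex[OF this] show ?thesis unfolding gdist_def .
qed

lemma gd_le: assumes "walk E xs" "hd xs = v" "last xs = w"
  shows "gdist E v w \<le> length xs - 1"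
proof -
  have "length xs = Suc (length xs - 1)" using assms by (cases xs) (auto simp: walk_def)
  then show ?thesis unfolding gdist_def using assms by (intro Least_le) blast
qed

lemma gd_adj: assumes "adj E x y" "r \<in> V"
  shows "gdist E x r \<le> Suc (gdist E y r)"
proof -
  have "y \<in> V" using adj_in_V[OF gr assms(1)] by simp
  obtain ys where ys: "walk E ys" "hd ys = y" "last ys = r" "length ys = Suc (gdist E y r)"
    using gd_ex[OF \<open>y \<in> V\<close> assms(2)] by blast
  have "walk E (x # ys)" using ys assms by (auto simp: walk_Cons)
  moreover have "ys \<noteq> []" using ys by auto
  ultimately have "gdist E x r \<le> length (x # ys) - 1" using gd_le[of "x # ys"] ys by simp
  then show ?thesis using ys by simp
qed

lemma gd0: assumes "v \<in> V" "r \<in> V" shows "gdist E v r = 0 \<longleftrightarrow> v = r"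
proof
  assume "gdist E v r = 0"
  then obtain xs where "walk E xs" "hd xs = v" "last xs = r" "length xs = 1"
    using gd_ex[OF assms] by auto
  then show "v = r" by (cases xs) auto
next
  assume "v = r"
  then show "gdist E v r = 0" using gd_le[of "[v]" v r] by simp
qed

lemma gd_par: assumes "v \<in> V" "r \<in> V" "v \<noteq> r"
  shows "\<exists>y. adj E v y \<and> Suc (gdist E y r) = gdist E v r"
proof -
  obtain xs where xs: "walk E xs" "hd xs = v" "last xs = r" "length xs = Suc (gdist E v r)"
    using gd_ex[OF assms(1,2)] by blast
  then obtain y ys where xy: "xs = v # y # ys"
    using assms(3) by (cases xs; cases "tl xs") auto
  have a: "adj E v y" "walk E (y # ys)" using xs(1) xy by (auto simp: walk_Cons)
  have l: "last (y # ys) = r" using xs(3) xy by simp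
  have "gdist E y r \<le> length (y # ys) - 1" by (rule gd_le[OF a(2) _ l]) simp
  then have "Suc (gdist E y r) \<le> gdist E v r" using xs xy by simp
  moreover have "gdist E v r \<le> Suc (gdist E y r)" using gd_adj[OF a(1) assms(2)] .
  ultimately show ?thesis using a by (intro exI[of _ y]) auto
qed

end



lemma graph_finE: "graph V E \<Longrightarrow> finite E"
  unfolding graph_def by (meson Pow_iff finite_Pow_iff rev_finite_subset subsetI)

lemma graph_edge: "graph V E \<Longrightarrow> e \<in> E \<Longrightarrow> \<exists>x y. e = {x,y} \<and> x \<noteq> y \<and> x \<in> V \<and> y \<in> V"
  unfolding graph_def by (metis card_2_iff insert_subset)

lemma deg_nb: assumes g: "graph V E" and v: "v \<in> V"
  shows "deg E v = card {w \<in> V. adj E v w}"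
proof -
  have "bij_betw (\<lambda>w. {v,w}) {w \<in> V. adj E v w} {e \<in> E. v \<in> e}"
  proof (rule bij_betwI')
    fix x y assume "x \<in> {w \<in> V. adj E v w}" "y \<in> {w \<in> V. adj E v w}"
    then show "({v, x} = {v, y}) = (x = y)" by (auto simp: doubleton_eq_iff)
  next
    fix x assume "x \<in> {w \<in> V. adj E v w}"
    then show "{v, x} \<in> {e \<in> E. v \<in> e}" by (auto simp: adj_def)
  next
    fix e assume e: "e \<in> {e \<in> E. v \<in> e}"
    then obtain x y where xy: "e = {x,y}" "x \<noteq> y" "x \<in> V" "y \<in> V" using graph_edge[OF g] by blast
    show "\<exists>w\<in>{w \<in> V. adj E v w}. e = {v, w}"
    proof (cases "v = x")
      case True then show ?thesis using xy e by (auto simp: adj_def)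
    next
      case False then have "v = y" using xy e by auto
      then show ?thesis using xy e by (auto simp: adj_def insert_commute)
    qed
  qed
  then show ?thesis unfolding deg_def by (simp add: bij_betw_same_card)
qed

lemma deg_sum: assumes g: "graph V E" and T: "T \<subseteq> V"
  shows "(\<Sum>v\<in>T. deg E v) = (\<Sum>e\<in>E. card (e \<inter> T))"
proof -
  have fE: "finite E" using graph_finE[OF g] .
  have fT: "finite T" using T g finite_subset unfolding graph_def by blast
  have "(\<Sum>v\<in>T. deg E v) = (\<Sum>v\<in>T. \<Sum>e\<in>E. if v \<in> e then 1 else 0)"
    unfolding deg_def by (intro sum.cong refl) (simp add: sum.inter_filter[OF fE, symmetric])
  also have "\<dots> = (\<Sum>e\<in>E. \<Sum>v\<in>T. if v \<in> e then 1 else 0)" by (rule sum.swap)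
  also have "\<dots> = (\<Sum>e\<in>E. card (e \<inter> T))"
  proof (intro sum.cong refl)
    fix e assume "e \<in> E"
    have "(\<Sum>v\<in>T. if v \<in> e then 1 else 0) = card {v \<in> T. v \<in> e}"
      by (simp add: sum.inter_filter[OF fT, symmetric])
    also have "{v \<in> T. v \<in> e} = e \<inter> T" by auto
    finally show "(\<Sum>v\<in>T. if v \<in> e then 1 else 0) = card (e \<inter> T)" .
  qed
  finally show ?thesis .
qed

lemma deg_sum_V: assumes g: "graph V E"
  shows "(\<Sum>v\<in>V. deg E v) = 2 * card E"
proof -
  have "(\<Sum>v\<in>V. deg E v) = (\<Sum>e\<in>E. card (e \<inter> V))" using deg_sum[OF g] by simp
  also have "\<dots> = (\<Sum>e\<in>E. 2)"
    using g unfolding graph_def by (intro sum.cong refl) (metis inf.absorb1)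
  finally show ?thesis by simp
qed

locale tree = conn +
  fixes r :: 'a
  assumes acyc: "\<not> has_cycle E" and rV: "r \<in> V"
begin

definition h where "h v = gdist E v r"
definition par where "par v = (SOME y. adj E v y \<and> Suc (h y) = h v)"
definition anc where "anc s v = (par ^^ s) v"

lemma h_adj: "adj E x y \<Longrightarrow> h x \<le> Suc (h y)"
  unfolding h_def using gd_adj rV by blast

lemma h0: assumes "v \<in> V" shows "h v = 0 \<longleftrightarrow> v = r"
  unfolding h_def by (rule gd0[OF assms rV])

lemma hr[simp]: "h r = 0" using h0 rV by simp

lemma par: assumes "v \<in> V" "v \<noteq> r" shows "adj E v (par v)" "Suc (h (par v)) = h v"
proof -
  have "\<exists>y. adj E v y \<and> Suc (h y) = h v" using gd_par[OF assms(1) rV assms(2)] unfolding h_def .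
  from someI_ex[OF this] show "adj E v (par v)" "Suc (h (par v)) = h v" unfolding par_def by auto
qed

lemma parV: "v \<in> V \<Longrightarrow> v \<noteq> r \<Longrightarrow> par v \<in> V"
  using par(1) adj_in_V[OF gr] by metis

lemma anc_0[simp]: "anc 0 v = v" by (simp add: anc_def)
lemma anc_Suc: "anc (Suc s) v = par (anc s v)" by (simp add: anc_def)

lemma anc: assumes "v \<in> V" shows "s \<le> h v \<Longrightarrow> anc s v \<in> V \<and> h (anc s v) = h v - s"
proof (induction s)
  case 0 then show ?case using assms by simp
next
  case (Suc s)
  then have a: "anc s v \<in> V" "h (anc s v) = h v - s" by auto
  then have "anc s v \<noteq> r" using Suc.prems h0 by auto
  then show ?case using a par[of "anc s v"] parV[of "anc s v"] by (simp add: anc_Suc)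
qed

lemma anc_adj: assumes "v \<in> V" "s < h v" shows "adj E (anc s v) (anc (Suc s) v)"
proof -
  have a: "anc s v \<in> V" "h (anc s v) = h v - s" using anc[OF assms(1), of s] assms by auto
  then have "anc s v \<noteq> r" using assms h0 by auto
  then show ?thesis using par(1)[OF a(1)] by (simp add: anc_Suc)
qed

lemma anc_top: "v \<in> V \<Longrightarrow> anc (h v) v = r"
  using anc[of v "h v"] h0 by auto

lemma chain_walk: assumes "v \<in> V" "t \<le> h v" shows "walk E (map (\<lambda>s. anc s v) [0..<Suc t])"
proof (rule walk_nthI)
  fix i assume "Suc i < length (map (\<lambda>s. anc s v) [0..<Suc t])"
  then have "i < t" by simp
  then show "adj E (map (\<lambda>s. anc s v) [0..<Suc t] ! i) (map (\<lambda>s. anc s v) [0..<Suc t] ! Suc i)"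
    using anc_adj[OF assms(1)] assms(2) by (simp del: upt_Suc)
qed simp

lemma chain_distinct: assumes "v \<in> V" "t \<le> h v" shows "distinct (map (\<lambda>s. anc s v) [0..<Suc t])"
proof -
  have "inj_on (\<lambda>s. anc s v) {0..<Suc t}"
  proof (rule inj_onI)
    fix i j assume "i \<in> {0..<Suc t}" "j \<in> {0..<Suc t}" "anc i v = anc j v"
    then show "i = j" using anc[OF assms(1), of i] anc[OF assms(1), of j] assms(2) by auto
  qed
  then show ?thesis by (simp add: distinct_map del: upt_Suc)
qed

lemma meet_cycle: assumes u: "u \<in> V" and v: "v \<in> V" and uv: "u \<noteq> v" and huv: "h u = h v"
  shows "\<exists>xs. walk E xs \<and> distinct xs \<and> hd xs = u \<and> last xs = v \<and> 3 \<le> length xs \<and> (\<forall>z\<in>set xs. h z \<le> h u)"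
proof -
  have ex: "\<exists>t. anc t u = anc t v" using anc_top[OF u] anc_top[OF v] huv by (intro exI[of _ "h u"]) simp
  define t where "t = (LEAST t. anc t u = anc t v)"
  have tm: "anc t u = anc t v" unfolding t_def by (rule LeastI_ex[OF ex])
  have tle: "t \<le> h u" unfolding t_def using anc_top[OF u] anc_top[OF v] huv by (intro Least_le) simp
  have t0: "t \<noteq> 0" using tm uv by (cases "t = 0") auto
  have lt: "\<And>s. s < t \<Longrightarrow> anc s u \<noteq> anc s v" unfolding t_def using not_less_Least by blast
  define A where "A = map (\<lambda>s. anc s u) [0..<Suc t]"
  define B where "B = map (\<lambda>s. anc s v) [0..<Suc (t - 1)]"
  have tt: "Suc (t - 1) = t" using t0 by simp
  have wA: "walk E A" unfolding A_def using chain_walk[OF u tle] .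
  have wB: "walk E B" unfolding B_def using chain_walk[OF v, of "t - 1"] tle huv by simp
  have dA: "distinct A" unfolding A_def using chain_distinct[OF u tle] .
  have dB: "distinct B" unfolding B_def using chain_distinct[OF v, of "t - 1"] tle huv by simp
  have lastA: "last A = anc t u" unfolding A_def by simp
  have lastB: "last B = anc (t - 1) v" unfolding B_def by simp
  have hdA: "hd A = u" unfolding A_def by (simp del: upt_Suc add: hd_map)
  have hdB: "hd B = v" unfolding B_def by (simp del: upt_Suc add: hd_map)
  have adjj: "adj E (last A) (hd (rev B))"
    using anc_adj[OF v, of "t - 1"] tle huv t0 tt tm lastA lastB
    by (simp add: hd_rev adj_sym)
  have disj: "set A \<inter> set B = {}"
  proof (rule ccontr)
    assume "set A \<inter> set B \<noteq> {}"
    then obtain i j where ij: "i \<le> t" "j < t" "anc i u = anc j v"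
      unfolding A_def B_def using tt by (auto simp del: upt_Suc simp: less_Suc_eq_le)
    then have "h u - i = h v - j" using anc[OF u, of i] anc[OF v, of j] tle huv by auto
    then have "i = j" using ij tle huv by auto
    then show False using lt ij by auto
  qed
  define xs where "xs = A @ rev B"
  have "walk E xs" unfolding xs_def by (rule walk_append[OF wA walk_rev[OF wB] adjj])
  moreover have "distinct xs" unfolding xs_def using dA dB disj by auto
  moreover have "A \<noteq> []" unfolding A_def by (simp del: upt_Suc)
  then have "hd xs = u" unfolding xs_def using hdA by simp
  moreover have "last xs = v" unfolding xs_def using hdB B_def by (simp add: last_rev del: upt_Suc)
  moreover have "3 \<le> length xs" unfolding xs_def A_def B_def using t0 tt by simp
  moreover have "\<forall>z\<in>set xs. h z \<le> h u"
  proof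
    fix z assume "z \<in> set xs"
    then have "(\<exists>s\<le>t. z = anc s u) \<or> (\<exists>s<t. z = anc s v)"
      unfolding xs_def A_def B_def using tt by (simp del: upt_Suc add: image_iff)
        (metis atLeastLessThan_iff less_Suc_eq_le)
    then show "h z \<le> h u" using anc[OF u] anc[OF v] tle huv by fastforce
  qed
  ultimately show ?thesis by blast
qed

lemma no_level_edge: assumes "adj E u v" shows "h u \<noteq> h v"
proof
  assume huv: "h u = h v"
  have uv: "u \<in> V" "v \<in> V" "u \<noteq> v" using adj_in_V[OF gr assms] by auto
  obtain xs where xs: "walk E xs" "distinct xs" "hd xs = u" "last xs = v" "3 \<le> length xs"
    using meet_cycle[OF uv huv] by blast
  have "has_cycle E" unfolding has_cycle_def using xs assms adj_sym by metis
  then show False using acyc by simp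
qed

lemma unique_lower: assumes "adj E x y1" "adj E x y2" "h y1 = h y2" "Suc (h y1) = h x"
  shows "y1 = y2"
proof (rule ccontr)
  assume ne: "y1 \<noteq> y2"
  have V: "y1 \<in> V" "y2 \<in> V" using adj_in_V[OF gr assms(1)] adj_in_V[OF gr assms(2)] by auto
  obtain xs where xs: "walk E xs" "distinct xs" "hd xs = y1" "last xs = y2" "3 \<le> length xs"
    "\<forall>z\<in>set xs. h z \<le> h y1"
    using meet_cycle[OF V ne assms(3)] by blast
  have "x \<notin> set xs" using xs(6) assms(4) by fastforce
  moreover have "walk E (x # xs)" using xs assms(1) by (auto simp: walk_Cons)
  moreover have "adj E y2 x" using assms(2) adj_sym by metis
  then have "adj E (last (x # xs)) (hd (x # xs))" using xs by (cases xs) auto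
  ultimately have "has_cycle E" unfolding has_cycle_def using xs
    by (intro exI[of _ "x # xs"]) auto
  then show False using acyc by simp
qed

lemma edge_par: assumes "adj E x y"
  shows "(x \<noteq> r \<and> y = par x \<and> h x = Suc (h y)) \<or> (y \<noteq> r \<and> x = par y \<and> h y = Suc (h x))"
proof -
  have V: "x \<in> V" "y \<in> V" using adj_in_V[OF gr assms] by auto
  have a: "h x \<le> Suc (h y)" "h y \<le> Suc (h x)" "h x \<noteq> h y"
    using h_adj[OF assms] h_adj[of y x] assms adj_sym[of E x y] no_level_edge[OF assms] by auto
  show ?thesis
  proof (cases "h x = Suc (h y)")
    case True
    then have "x \<noteq> r" using h0[OF V(1)] by auto
    have p: "adj E x (par x)" "Suc (h (par x)) = h x" using par[OF V(1) \<open>x \<noteq> r\<close>] by auto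
    have "y = par x" by (rule unique_lower[OF assms p(1)]) (use p(2) True in auto)
    then show ?thesis using True \<open>x \<noteq> r\<close> by auto
  next
    case False
    then have hy: "h y = Suc (h x)" using a by auto
    then have "y \<noteq> r" using h0[OF V(2)] by auto
    have p: "adj E y (par y)" "Suc (h (par y)) = h y" using par[OF V(2) \<open>y \<noteq> r\<close>] by auto
    have yx: "adj E y x" using assms adj_sym by metis
    have "x = par y" by (rule unique_lower[OF yx p(1)]) (use p(2) hy in auto)
    then show ?thesis using hy \<open>y \<noteq> r\<close> by auto
  qed
qed

lemma E_eq: "E = (\<lambda>w. {w, par w}) ` (V - {r})"
proof
  show "E \<subseteq> (\<lambda>w. {w, par w}) ` (V - {r})"
  proof
    fix e assume "e \<in> E"
    then obtain x y where xy: "e = {x,y}" "x \<in> V" "y \<in> V" using graph_edge[OF gr] by blast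
    then have "adj E x y" using \<open>e \<in> E\<close> by (simp add: adj_def)
    from edge_par[OF this] show "e \<in> (\<lambda>w. {w, par w}) ` (V - {r})"
      using xy by (auto simp: insert_commute)
  qed
next
  show "(\<lambda>w. {w, par w}) ` (V - {r}) \<subseteq> E"
    using par(1) by (auto simp: adj_def)
qed

lemma card_E: "card E = card V - 1"
proof -
  have "inj_on (\<lambda>w. {w, par w}) (V - {r})"
  proof (rule inj_onI)
    fix w w' assume w: "w \<in> V - {r}" "w' \<in> V - {r}" "{w, par w} = {w', par w'}"
    show "w = w'"
    proof (rule ccontr)
      assume "w \<noteq> w'"
      then have "w = par w'" "w' = par w" using w(3) by (auto simp: doubleton_eq_iff)
      then show False using par(2)[of w] par(2)[of w'] w by auto
    qed
  qed
  then have "card E = card (V - {r})" by (subst E_eq) (rule card_image)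
  then show ?thesis using rV gr unfolding graph_def by simp
qed

lemma finV: "finite V" using gr unfolding graph_def by simp

lemma sum_deg: "(\<Sum>v\<in>V. deg E v) = 2 * (card V - 1)"
  using deg_sum_V[OF gr] card_E by simp

definition ch where "ch e = (SOME w. w \<in> V - {r} \<and> e = {w, par w})"

lemma ch: "e \<in> E \<Longrightarrow> ch e \<in> V - {r} \<and> e = {ch e, par (ch e)}"
  unfolding ch_def by (rule someI_ex) (use E_eq in auto)

lemma ch_inj: "inj_on ch E"
  by (rule inj_onI) (metis ch)

lemma ch_bound: assumes W: "W \<subseteq> V" "W \<noteq> {}" and F: "F \<subseteq> E" and FW: "\<And>e. e \<in> F \<Longrightarrow> e \<subseteq> W"
  shows "card F + 1 \<le> card W"
proof -
  have fW: "finite W" using W finV finite_subset by blast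
  obtain z where z: "z \<in> W" "\<And>w. w \<in> W \<Longrightarrow> h z \<le> h w"
    using ex_has_least_nat[of "\<lambda>w. w \<in> W" _ h] W by blast
  have "ch ` F \<subseteq> W - {z}"
  proof
    fix w assume "w \<in> ch ` F"
    then obtain e where e: "e \<in> F" "w = ch e" by blast
    then have c: "w \<in> V - {r}" "e = {w, par w}" using ch F by auto
    then have "w \<in> W" "par w \<in> W" using FW[OF e(1)] by auto
    moreover have "w \<noteq> z" using z(2)[OF \<open>par w \<in> W\<close>] par(2)[of w] c by auto
    ultimately show "w \<in> W - {z}" by simp
  qed
  then have "card (ch ` F) \<le> card (W - {z})" using fW by (intro card_mono) auto
  moreover have "card (ch ` F) = card F" using inj_on_subset[OF ch_inj F] by (simp add: card_image)
  moreover have "card (W - {z}) + 1 = card W"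
  proof -
    have "card W > 0" using z(1) fW card_gt_0_iff by blast
    then show ?thesis using z(1) fW by (simp add: card_Diff_singleton)
  qed
  ultimately show ?thesis by simp
qed

lemma forest_bound: assumes T: "T \<subseteq> V" "T \<noteq> {}"
  shows "(\<Sum>v\<in>T. deg E v) + 2 \<le> 2 * card T + card {y \<in> V - T. \<exists>t\<in>T. adj E t y}"
proof -
  define N where "N = {y \<in> V - T. \<exists>t\<in>T. adj E t y}"
  have fE: "finite E" using graph_finE[OF gr] .
  have fT: "finite T" using T finV finite_subset by blast
  have fN: "finite N" unfolding N_def using finV by simp
  define Inc where "Inc = {e \<in> E. e \<inter> T \<noteq> {}}"
  define In where "In = {e \<in> E. e \<subseteq> T}"
  have "(\<Sum>v\<in>T. deg E v) = (\<Sum>e\<in>E. card (e \<inter> T))" using deg_sum[OF gr T(1)] .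
  also have "\<dots> = (\<Sum>e\<in>E. (if e \<inter> T \<noteq> {} then 1 else 0) + (if e \<subseteq> T then 1 else 0))"
  proof (intro sum.cong refl)
    fix e assume "e \<in> E"
    then obtain x y where xy: "e = {x,y}" "x \<noteq> y" using graph_edge[OF gr] by blast
    show "card (e \<inter> T) = (if e \<inter> T \<noteq> {} then 1 else 0) + (if e \<subseteq> T then 1 else 0)"
      using xy by (cases "x \<in> T"; cases "y \<in> T") (auto simp: Int_insert_left)
  qed
  also have "\<dots> = card Inc + card In"
    unfolding Inc_def In_def sum.distrib
    by (simp add: sum.inter_filter[OF fE, symmetric])
  finally have s: "(\<Sum>v\<in>T. deg E v) = card Inc + card In" .
  have "card Inc + 1 \<le> card (T \<union> N)"
  proof (rule ch_bound)
    show "T \<union> N \<subseteq> V" "T \<union> N \<noteq> {}" using T unfolding N_def by auto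
    show "Inc \<subseteq> E" unfolding Inc_def by auto
    fix e assume "e \<in> Inc"
    then obtain x y where xy: "e = {x,y}" "x \<in> V" "y \<in> V" "e \<in> E" "e \<inter> T \<noteq> {}"
      unfolding Inc_def using graph_edge[OF gr] by blast
    then have "adj E x y" "adj E y x" by (auto simp: adj_def insert_commute)
    then show "e \<subseteq> T \<union> N" using xy unfolding N_def by auto
  qed
  moreover have "card In + 1 \<le> card T"
    by (rule ch_bound) (use T in \<open>auto simp: In_def\<close>)
  moreover have "card (T \<union> N) = card T + card N"
    using fT fN by (intro card_Un_disjoint) (auto simp: N_def)
  ultimately show ?thesis using s unfolding N_def by linarith
qed

end



lemma sum_fun_apply: "finite A \<Longrightarrow> (sum F A) z = (\<Sum>a\<in>A. F a z)"
  for F :: "'b \<Rightarrow> 'x \<Rightarrow> real"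
  by (induction A rule: finite_induct) (auto simp: plus_fun_def zero_fun_def)

lemma quad_zero: fixes a b :: real assumes "\<And>t. 0 \<le> a * t\<^sup>2 + b * t" shows "b = 0"
proof (rule ccontr)
  assume b: "b \<noteq> 0"
  define s where "s = 1 / (\<bar>a\<bar> + 1)"
  have s: "s > 0" "\<bar>a\<bar> * s < 1" unfolding s_def by (auto simp: field_simps)
  have "0 \<le> a * (- b * s)\<^sup>2 + b * (- b * s)" using assms .
  also have "\<dots> = b\<^sup>2 * s * (a * s - 1)" by (simp add: power2_eq_square algebra_simps)
  also have "\<dots> < 0"
  proof -
    have "a * s - 1 < 0" using s abs_ge_self[of a] by (smt (verit) mult_right_mono)
    moreover have "b\<^sup>2 * s > 0" using b s by simp
    ultimately show ?thesis by (simp add: mult_pos_neg)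
  qed
  finally show False by simp
qed

locale gsp =
  fixes V :: "'a set" and E :: "'a set set"
  assumes gr0: "graph V E"
begin

abbreviation "I \<equiv> Defs.interior V E"
abbreviation "dop \<equiv> dirichlet_op V E"
definition QF :: "('a \<Rightarrow> real) \<Rightarrow> real" where "QF x = (\<Sum>v\<in>I. x v * dop x v)"
definition nrm :: "('a \<Rightarrow> real) \<Rightarrow> real" where "nrm x = (\<Sum>v\<in>I. (x v)\<^sup>2)"

lemma finI: "finite I"
  using gr0 unfolding graph_def Defs.interior_def by simp

lemma dop_alt: "dop x v = real (deg E v) * x v - (\<Sum>w\<in>I. if adj E v w then x w else 0)"
  unfolding dirichlet_op_def by (simp add: sum.inter_filter[OF finI])

lemma dop_lin: "dop (\<lambda>u. x u + t * y u) v = dop x v + t * dop y v"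
proof -
  have "(\<Sum>w\<in>I. if adj E v w then x w + t * y w else 0) =
     (\<Sum>w\<in>I. (if adj E v w then x w else 0) + t * (if adj E v w then y w else 0))"
    by (intro sum.cong refl) auto
  also have "\<dots> = (\<Sum>w\<in>I. if adj E v w then x w else 0) + t * (\<Sum>w\<in>I. if adj E v w then y w else 0)"
    by (simp add: sum.distrib sum_distrib_left)
  finally show ?thesis unfolding dop_alt by (simp add: algebra_simps)
qed

lemma dop_scale: "dop (\<lambda>u. t * y u) v = t * dop y v"
  using dop_lin[of "\<lambda>_. 0" t y v] unfolding dop_alt by (simp add: algebra_simps cong: if_cong)

lemma dop_cong: "(\<And>u. u \<in> I \<Longrightarrow> x u = y u) \<Longrightarrow> v \<in> I \<Longrightarrow> dop x v = dop y v"
  unfolding dirichlet_op_def by auto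

lemma dop_sym: "(\<Sum>v\<in>I. y v * dop x v) = (\<Sum>v\<in>I. x v * dop y v)"
proof -
  have A: "(\<Sum>v\<in>I. y v * dop x v) = (\<Sum>v\<in>I. real (deg E v) * x v * y v) - (\<Sum>v\<in>I. \<Sum>w\<in>I. if adj E v w then y v * x w else 0)"
    unfolding dop_alt by (simp add: algebra_simps sum_subtractf sum_distrib_left if_distrib cong: if_cong)
  have B: "(\<Sum>v\<in>I. x v * dop y v) = (\<Sum>v\<in>I. real (deg E v) * x v * y v) - (\<Sum>v\<in>I. \<Sum>w\<in>I. if adj E v w then x v * y w else 0)"
    unfolding dop_alt by (simp add: algebra_simps sum_subtractf sum_distrib_left if_distrib cong: if_cong)
  have "(\<Sum>v\<in>I. \<Sum>w\<in>I. if adj E v w then y v * x w else 0) = (\<Sum>w\<in>I. \<Sum>v\<in>I. if adj E v w then y v * x w else 0)"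
    by (rule sum.swap)
  also have "\<dots> = (\<Sum>w\<in>I. \<Sum>v\<in>I. if adj E w v then x w * y v else 0)"
    by (intro sum.cong refl) (auto simp: adj_sym mult.commute)
  finally show ?thesis using A B by simp
qed

lemma QF_cong: "(\<And>u. u \<in> I \<Longrightarrow> x u = y u) \<Longrightarrow> QF x = QF y"
  unfolding QF_def using dop_cong[of x y] by (auto intro!: sum.cong)

lemma nrm_cong: "(\<And>u. u \<in> I \<Longrightarrow> x u = y u) \<Longrightarrow> nrm x = nrm y"
  unfolding nrm_def by auto

lemma QF_scale: "QF (\<lambda>u. t * y u) = t\<^sup>2 * QF y"
  unfolding QF_def dop_scale by (simp add: sum_distrib_left power2_eq_square algebra_simps)

lemma nrm_scale: "nrm (\<lambda>u. t * y u) = t\<^sup>2 * nrm y"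
  unfolding nrm_def by (simp add: sum_distrib_left power_mult_distrib)

lemma nrm_nonneg: "nrm x \<ge> 0" unfolding nrm_def by (intro sum_nonneg) simp

lemma nrm_pos: "nrm x > 0 \<longleftrightarrow> (\<exists>v\<in>I. x v \<noteq> 0)"
proof
  assume "nrm x > 0"
  show "\<exists>v\<in>I. x v \<noteq> 0"
  proof (rule ccontr)
    assume "\<not> (\<exists>v\<in>I. x v \<noteq> 0)"
    then have "nrm x = 0" unfolding nrm_def by simp
    then show False using \<open>nrm x > 0\<close> by simp
  qed
next
  assume "\<exists>v\<in>I. x v \<noteq> 0"
  then obtain v where "v \<in> I" "x v \<noteq> 0" by blast
  then have "(x v)\<^sup>2 \<le> nrm x" unfolding nrm_def
    by (intro member_le_sum) (auto simp: finI)
  then show "nrm x > 0" using \<open>x v \<noteq> 0\<close> by (smt (verit) zero_less_power2)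
qed

lemma QF_eig: assumes "\<forall>v\<in>I. dop x v = \<mu> * x v" shows "QF x = \<mu> * nrm x"
  unfolding QF_def nrm_def using assms by (simp add: sum_distrib_left power2_eq_square algebra_simps)

lemma QF_lin: "QF (\<lambda>u. x u + t * y u) = QF x + 2 * t * (\<Sum>v\<in>I. y v * dop x v) + t\<^sup>2 * QF y"
proof -
  have "QF (\<lambda>u. x u + t * y u) = (\<Sum>v\<in>I. x v * dop x v + t * (y v * dop x v) + t * (x v * dop y v) + t\<^sup>2 * (y v * dop y v))"
    unfolding QF_def dop_lin by (intro sum.cong refl) (simp add: algebra_simps power2_eq_square)
  also have "\<dots> = QF x + t * (\<Sum>v\<in>I. y v * dop x v) + t * (\<Sum>v\<in>I. x v * dop y v) + t\<^sup>2 * QF y"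
    unfolding QF_def by (simp add: sum.distrib sum_distrib_left)
  finally show ?thesis using dop_sym[of y x] by simp
qed

lemma nrm_lin: "nrm (\<lambda>u. x u + t * y u) = nrm x + 2 * t * (\<Sum>v\<in>I. y v * x v) + t\<^sup>2 * nrm y"
proof -
  have "nrm (\<lambda>u. x u + t * y u) = (\<Sum>v\<in>I. (x v)\<^sup>2 + 2 * t * (y v * x v) + t\<^sup>2 * (y v)\<^sup>2)"
    unfolding nrm_def by (intro sum.cong refl) (simp add: algebra_simps power2_eq_square)
  then show ?thesis unfolding nrm_def by (simp add: sum.distrib sum_distrib_left)
qed

definition K where "K = (\<Pi>\<^sub>E v\<in>UNIV. if v \<in> I then {-1..1} else {0::real}) \<inter> {x. nrm x = 1}"

lemma cont_coord: "continuous_on A (\<lambda>x::'a \<Rightarrow> real. x v)"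
  by (rule continuous_on_subset[OF continuous_on_product_coordinates]) simp

lemma cont_nrm: "continuous_on A nrm"
  unfolding nrm_def by (intro continuous_intros cont_coord)

lemma cont_QF: "continuous_on A QF"
  unfolding QF_def dirichlet_op_def by (intro continuous_intros cont_coord)

lemma compact_K: "compact K"
proof -
  have "compactin (product_topology (\<lambda>v. euclidean) UNIV)
           (\<Pi>\<^sub>E v\<in>UNIV. if v \<in> I then {-1..1} else {0::real})"
    by (subst compactin_PiE) auto
  then have "compact (\<Pi>\<^sub>E v\<in>UNIV. if v \<in> I then {-1..1} else {0::real})"
    by (simp add: euclidean_product_topology)
  moreover have "closed {x. nrm x = 1}"
    by (rule closed_Collect_eq) (auto intro: cont_nrm)
  ultimately show ?thesis unfolding K_def by (rule compact_Int_closed)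
qed

lemma K_mem: assumes "\<forall>v. v \<notin> I \<longrightarrow> x v = 0" "nrm x = 1" shows "x \<in> K"
proof -
  have "\<And>v. v \<in> I \<Longrightarrow> (x v)\<^sup>2 \<le> nrm x" unfolding nrm_def
    by (intro member_le_sum) (auto simp: finI)
  then have "\<And>v. v \<in> I \<Longrightarrow> \<bar>x v\<bar> \<le> 1" using assms(2) by (metis abs_le_square_iff abs_one power_one)
  then show ?thesis unfolding K_def using assms by (auto simp: PiE_UNIV_domain abs_le_iff)
qed

lemma K_zero: "x \<in> K \<Longrightarrow> v \<notin> I \<Longrightarrow> x v = 0"
  unfolding K_def by (auto simp: PiE_UNIV_domain Pi_iff) (metis empty_iff insert_iff)

definition x0 where "x0 = (SOME x. x \<in> K \<and> (\<forall>y\<in>K. QF x \<le> QF y))"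
definition m0 where "m0 = QF x0"

lemma x0: assumes "I \<noteq> {}" shows "x0 \<in> K" "\<And>y. y \<in> K \<Longrightarrow> m0 \<le> QF y"
proof -
  obtain v where v: "v \<in> I" using assms by blast
  define e where "e = (\<lambda>u. if u = v then 1 else (0::real))"
  have "(\<Sum>u\<in>I. (e u)\<^sup>2) = (\<Sum>u\<in>I. if u = v then 1 else 0)"
    by (intro sum.cong refl) (auto simp: e_def)
  then have "nrm e = 1" unfolding nrm_def using v finI by (simp add: sum.delta)
  then have "e \<in> K" using v by (intro K_mem) (auto simp: e_def)
  then have "\<exists>x\<in>K. \<forall>y\<in>K. QF x \<le> QF y"
    using continuous_attains_inf[OF compact_K _ cont_QF] by blast
  then have "x0 \<in> K \<and> (\<forall>y\<in>K. QF x0 \<le> QF y)" unfolding x0_def by (rule someI2_bex) auto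
  then show "x0 \<in> K" "\<And>y. y \<in> K \<Longrightarrow> m0 \<le> QF y" unfolding m0_def by auto
qed

lemma rayleigh: assumes "I \<noteq> {}" "nrm y > 0" shows "m0 * nrm y \<le> QF y"
proof -
  define c where "c = 1 / sqrt (nrm y)"
  define z where "z = (\<lambda>u. if u \<in> I then c * y u else 0)"
  have c2: "c\<^sup>2 * nrm y = 1" unfolding c_def using assms(2) by (simp add: power_divide)
  have "nrm z = c\<^sup>2 * nrm y" unfolding z_def by (subst nrm_scale[symmetric]) (rule nrm_cong, simp)
  then have "z \<in> K" using c2 by (intro K_mem) (auto simp: z_def)
  then have "m0 \<le> QF z" using x0(2)[OF assms(1)] by blast
  also have "QF z = c\<^sup>2 * QF y" unfolding z_def by (subst QF_scale[symmetric]) (rule QF_cong, simp)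
  finally have m: "m0 \<le> c\<^sup>2 * QF y" .
  have "m0 * nrm y \<le> c\<^sup>2 * QF y * nrm y" using mult_right_mono[OF m nrm_nonneg] .
  also have "c\<^sup>2 * QF y * nrm y = QF y * (c\<^sup>2 * nrm y)" by (simp add: algebra_simps)
  finally show ?thesis using c2 by simp
qed

end



context gsp begin

lemma QF_zero: "(\<And>u. u \<in> I \<Longrightarrow> y u = 0) \<Longrightarrow> QF y = 0"
  using QF_cong[of y "\<lambda>_. 0"] unfolding QF_def dirichlet_op_def by simp

lemma rayleigh': assumes "I \<noteq> {}" shows "m0 * nrm y \<le> QF y"
proof (cases "nrm y > 0")
  case True then show ?thesis using rayleigh[OF assms] by blast
next
  case False
  then have "\<forall>v\<in>I. y v = 0" using nrm_pos by blast
  then have "nrm y = 0" "QF y = 0" using QF_zero unfolding nrm_def by auto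
  then show ?thesis by simp
qed

lemma x0_eig: assumes ne: "I \<noteq> {}" shows "\<forall>v\<in>I. dop x0 v = m0 * x0 v"
proof
  fix v assume v: "v \<in> I"
  define e where "e = (\<lambda>u. if u = v then 1 else (0::real))"
  have k: "x0 \<in> K" using x0(1)[OF ne] .
  have n1: "nrm x0 = 1" using k unfolding K_def by simp
  have "(\<Sum>u\<in>I. e u * dop x0 u) = (\<Sum>u\<in>I. if u = v then dop x0 u else 0)"
    by (intro sum.cong refl) (simp add: e_def)
  then have se1: "(\<Sum>u\<in>I. e u * dop x0 u) = dop x0 v" using v finI by (simp add: sum.delta)
  have "(\<Sum>u\<in>I. e u * x0 u) = (\<Sum>u\<in>I. if u = v then x0 u else 0)"
    by (intro sum.cong refl) (simp add: e_def)
  then have se2: "(\<Sum>u\<in>I. e u * x0 u) = x0 v" using v finI by (simp add: sum.delta)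
  have "\<And>t. 0 \<le> (QF e - m0 * nrm e) * t\<^sup>2 + (2 * dop x0 v - 2 * m0 * x0 v) * t"
  proof -
    fix t
    have "m0 * nrm (\<lambda>u. x0 u + t * e u) \<le> QF (\<lambda>u. x0 u + t * e u)" using rayleigh'[OF ne] .
    then have "m0 * (1 + 2 * t * x0 v + t\<^sup>2 * nrm e) \<le> m0 + 2 * t * dop x0 v + t\<^sup>2 * QF e"
      unfolding nrm_lin QF_lin se1 se2 n1 m0_def .
    then show "0 \<le> (QF e - m0 * nrm e) * t\<^sup>2 + (2 * dop x0 v - 2 * m0 * x0 v) * t"
      by (simp add: algebra_simps)
  qed
  from quad_zero[OF this] show "dop x0 v = m0 * x0 v" by simp
qed

lemma m0_eig: "I \<noteq> {} \<Longrightarrow> m0 \<in> dirichlet_eigenvalues V E"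
proof -
  assume ne: "I \<noteq> {}"
  have "nrm x0 = 1" using x0(1)[OF ne] unfolding K_def by simp
  then have "\<exists>v\<in>I. x0 v \<noteq> 0" using nrm_pos[of x0] by simp
  then show ?thesis unfolding dirichlet_eigenvalues_def using x0_eig[OF ne] by blast
qed

lemma m0_le: assumes ne: "I \<noteq> {}" and mu: "\<mu> \<in> dirichlet_eigenvalues V E" shows "m0 \<le> \<mu>"
proof -
  obtain x where x: "\<exists>v\<in>I. x v \<noteq> 0" "\<forall>v\<in>I. dop x v = \<mu> * x v"
    using mu unfolding dirichlet_eigenvalues_def by blast
  have p: "nrm x > 0" using x(1) nrm_pos by simp
  have "m0 * nrm x \<le> \<mu> * nrm x" using rayleigh'[OF ne, of x] QF_eig[OF x(2)] by simp
  then show ?thesis using p by simp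
qed

definition ev where "ev \<mu> = (SOME x. (\<exists>v\<in>I. x v \<noteq> 0) \<and> (\<forall>v\<in>I. dop x v = \<mu> * x v))"
definition zv where "zv \<mu> = (\<lambda>u. if u \<in> I then ev \<mu> u else 0)"

lemma ev: assumes "\<mu> \<in> dirichlet_eigenvalues V E"
  shows "(\<exists>v\<in>I. ev \<mu> v \<noteq> 0) \<and> (\<forall>v\<in>I. dop (ev \<mu>) v = \<mu> * ev \<mu> v)"
proof -
  have "\<exists>x. (\<exists>v\<in>I. x v \<noteq> 0) \<and> (\<forall>v\<in>I. dop x v = \<mu> * x v)"
    using assms unfolding dirichlet_eigenvalues_def by simp
  then show ?thesis unfolding ev_def by (rule someI_ex)
qed

lemma ev_orth: assumes "\<mu>1 \<in> dirichlet_eigenvalues V E" "\<mu>2 \<in> dirichlet_eigenvalues V E" "\<mu>1 \<noteq> \<mu>2"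
  shows "(\<Sum>u\<in>I. ev \<mu>1 u * ev \<mu>2 u) = 0"
proof -
  have "\<mu>1 * (\<Sum>u\<in>I. ev \<mu>2 u * ev \<mu>1 u) = (\<Sum>u\<in>I. ev \<mu>2 u * dop (ev \<mu>1) u)"
    using ev[OF assms(1)] by (simp add: sum_distrib_left algebra_simps)
  also have "\<dots> = (\<Sum>u\<in>I. ev \<mu>1 u * dop (ev \<mu>2) u)" by (rule dop_sym)
  also have "\<dots> = \<mu>2 * (\<Sum>u\<in>I. ev \<mu>1 u * ev \<mu>2 u)"
    using ev[OF assms(2)] by (simp add: sum_distrib_left algebra_simps)
  finally have "(\<mu>1 - \<mu>2) * (\<Sum>u\<in>I. ev \<mu>1 u * ev \<mu>2 u) = 0" by (simp add: algebra_simps)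
  then show ?thesis using assms(3) by simp
qed

lemma finite_eig: "finite (dirichlet_eigenvalues V E)"
proof -
  define EV where "EV = dirichlet_eigenvalues V E"
  define e where "e = (\<lambda>(i::'a) (u::'a). if u = i then 1 else (0::real))"
  have zvI: "\<And>\<mu> u. u \<in> I \<Longrightarrow> zv \<mu> u = ev \<mu> u" unfolding zv_def by simp
  have orth: "\<And>\<mu>1 \<mu>2. \<mu>1 \<in> EV \<Longrightarrow> \<mu>2 \<in> EV \<Longrightarrow> \<mu>1 \<noteq> \<mu>2 \<Longrightarrow> (\<Sum>u\<in>I. zv \<mu>1 u * zv \<mu>2 u) = 0"
    using ev_orth unfolding EV_def zv_def by simp
  have pos: "\<And>\<mu>. \<mu> \<in> EV \<Longrightarrow> (\<Sum>u\<in>I. zv \<mu> u * zv \<mu> u) > 0"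
  proof -
    fix \<mu> assume "\<mu> \<in> EV"
    then have "nrm (zv \<mu>) > 0" using ev[of \<mu>] nrm_pos zvI unfolding EV_def by auto
    then show "(\<Sum>u\<in>I. zv \<mu> u * zv \<mu> u) > 0" unfolding nrm_def by (simp add: power2_eq_square)
  qed
  have inj: "inj_on zv EV"
  proof (rule inj_onI)
    fix \<mu>1 \<mu>2 assume a: "\<mu>1 \<in> EV" "\<mu>2 \<in> EV" "zv \<mu>1 = zv \<mu>2"
    show "\<mu>1 = \<mu>2"
    proof (rule ccontr)
      assume "\<mu>1 \<noteq> \<mu>2"
      then have "(\<Sum>u\<in>I. zv \<mu>1 u * zv \<mu>2 u) = 0" using orth a by blast
      then show False using pos[OF a(1)] a(3) by simp
    qed
  qed
  have ind: "fvs.independent (zv ` EV)"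
    unfolding fvs.independent_explicit_module
  proof (intro allI impI)
    fix t u w assume a: "finite t" "t \<subseteq> zv ` EV" "(\<Sum>v\<in>t. (\<lambda>y. u v * v y)) = 0" "w \<in> t"
    have z: "\<And>y. (\<Sum>v\<in>t. u v * v y) = 0"
    proof -
      fix y
      have "(\<Sum>v\<in>t. (\<lambda>y. u v * v y)) y = 0" using a(3) by simp
      then show "(\<Sum>v\<in>t. u v * v y) = 0" by (simp add: sum_fun_apply[OF a(1)])
    qed
    have "0 = (\<Sum>y\<in>I. (\<Sum>v\<in>t. u v * v y) * w y)" using z by simp
    also have "\<dots> = (\<Sum>v\<in>t. u v * (\<Sum>y\<in>I. v y * w y))"
      by (simp add: sum_distrib_left sum_distrib_right algebra_simps sum.swap[of _ I])
    also have "\<dots> = (\<Sum>v\<in>t. if v = w then u w * (\<Sum>y\<in>I. w y * w y) else 0)"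
    proof (intro sum.cong refl)
      fix v assume "v \<in> t"
      show "u v * (\<Sum>y\<in>I. v y * w y) = (if v = w then u w * (\<Sum>y\<in>I. w y * w y) else 0)"
      proof (cases "v = w")
        case False
        obtain \<mu>1 \<mu>2 where m: "\<mu>1 \<in> EV" "\<mu>2 \<in> EV" "v = zv \<mu>1" "w = zv \<mu>2"
          using a(2,4) \<open>v \<in> t\<close> by blast
        then have "\<mu>1 \<noteq> \<mu>2" using False by auto
        then show ?thesis using orth[OF m(1,2)] m False by simp
      qed simp
    qed
    also have "\<dots> = u w * (\<Sum>y\<in>I. w y * w y)" using a(1,4) by (simp add: sum.delta')
    finally have "u w * (\<Sum>y\<in>I. w y * w y) = 0" by simp
    moreover have "(\<Sum>y\<in>I. w y * w y) > 0" using pos a(2,4) by blast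
    ultimately show "u w = 0" by simp
  qed
  have sp: "zv ` EV \<subseteq> fvs.span (e ` I)"
  proof
    fix x assume "x \<in> zv ` EV"
    then obtain \<mu> where x: "x = zv \<mu>" by blast
    have "x = (\<Sum>i\<in>I. (\<lambda>y. x i * e i y))"
    proof
      fix y
      have "(\<Sum>i\<in>I. (\<lambda>y. x i * e i y)) y = (\<Sum>i\<in>I. x i * e i y)" by (simp add: sum_fun_apply[OF finI])
      also have "\<dots> = (\<Sum>i\<in>I. if y = i then x i else 0)" unfolding e_def
        by (intro sum.cong refl) simp
      also have "\<dots> = (if y \<in> I then x y else 0)"
        using finI by (simp add: sum.delta)
      also have "\<dots> = x y" unfolding x zv_def by simp
      finally show "x y = (\<Sum>i\<in>I. (\<lambda>y. x i * e i y)) y" by simp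
    qed
    also have "\<dots> \<in> fvs.span (e ` I)"
      by (intro fvs.span_sum fvs.span_scale fvs.span_base) auto
    finally show "x \<in> fvs.span (e ` I)" .
  qed
  have "finite (zv ` EV)" using fvs.independent_span_bound[OF _ ind sp] finI by blast
  then show ?thesis using inj finite_imageD unfolding EV_def by blast
qed

lemma lambda_char: assumes "I \<noteq> {}"
  shows "lambda_D V E \<in> dirichlet_eigenvalues V E" "\<And>y. lambda_D V E * nrm y \<le> QF y"
proof -
  have "lambda_D V E = m0" unfolding lambda_D_def
    by (rule Min_eqI[OF finite_eig]) (use m0_le[OF assms] m0_eig[OF assms] in auto)
  then show "lambda_D V E \<in> dirichlet_eigenvalues V E" "\<And>y. lambda_D V E * nrm y \<le> QF y"
    using m0_eig[OF assms] rayleigh'[OF assms] by auto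
qed

end



context gsp begin

lemma finV0: "finite V" using gr0 unfolding graph_def by simp

lemma QF_pairs: assumes z: "\<And>u. u \<in> V \<Longrightarrow> u \<notin> I \<Longrightarrow> x u = 0"
  shows "2 * QF x = (\<Sum>(v,w)\<in>Sigma V (\<lambda>v. {w\<in>V. adj E v w}). (x v - x w)\<^sup>2)"
proof -
  have IV: "I \<subseteq> V" unfolding Defs.interior_def by auto
  define N where "N v = (\<Sum>w\<in>V. if adj E v w then x w else 0)" for v
  have N: "\<And>v. (\<Sum>w\<in>I. if adj E v w then x w else 0) = N v"
    unfolding N_def using z IV finV0 by (intro sum.mono_neutral_left) auto
  have "QF x = (\<Sum>v\<in>I. real (deg E v) * (x v)\<^sup>2 - x v * N v)"
    unfolding QF_def dop_alt N by (simp add: algebra_simps power2_eq_square)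
  also have "\<dots> = (\<Sum>v\<in>V. real (deg E v) * (x v)\<^sup>2 - x v * N v)"
    using z IV finV0 by (intro sum.mono_neutral_left) auto
  finally have Q: "QF x = (\<Sum>v\<in>V. real (deg E v) * (x v)\<^sup>2) - (\<Sum>v\<in>V. x v * N v)"
    by (simp add: sum_subtractf)
  have "(\<Sum>(v,w)\<in>Sigma V (\<lambda>v. {w\<in>V. adj E v w}). (x v - x w)\<^sup>2)
      = (\<Sum>v\<in>V. \<Sum>w\<in>{w\<in>V. adj E v w}. (x v - x w)\<^sup>2)"
    by (rule sum.Sigma[symmetric]) (auto simp: finV0)
  also have "\<dots> = (\<Sum>v\<in>V. \<Sum>w\<in>V. if adj E v w then (x v - x w)\<^sup>2 else 0)"
    by (simp add: sum.inter_filter[OF finV0])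
  also have "\<dots> = (\<Sum>v\<in>V. \<Sum>w\<in>V. if adj E v w then (x v)\<^sup>2 + (x w)\<^sup>2 - 2 * (x v * x w) else 0)"
    by (intro sum.cong refl) (simp add: power2_eq_square algebra_simps)
  also have "\<dots> = (\<Sum>v\<in>V. \<Sum>w\<in>V. if adj E v w then (x v)\<^sup>2 else 0)
      + (\<Sum>v\<in>V. \<Sum>w\<in>V. if adj E v w then (x w)\<^sup>2 else 0)
      - 2 * (\<Sum>v\<in>V. \<Sum>w\<in>V. if adj E v w then x v * x w else 0)"
  proof -
    have pw: "\<And>v w. (if adj E v w then (x v)\<^sup>2 + (x w)\<^sup>2 - 2 * (x v * x w) else 0) = (if adj E v w then (x v)\<^sup>2 else 0) + (if adj E v w then (x w)\<^sup>2 else 0) - 2 * (if adj E v w then x v * x w else 0)"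
      by simp
    show ?thesis by (simp only: pw sum.distrib sum_subtractf sum_distrib_left[symmetric])
  qed
  also have "(\<Sum>v\<in>V. \<Sum>w\<in>V. if adj E v w then x v * x w else 0) = (\<Sum>v\<in>V. x v * N v)"
    unfolding N_def sum_distrib_left by (intro sum.cong refl) auto
  also have "(\<Sum>v\<in>V. \<Sum>w\<in>V. if adj E v w then (x w)\<^sup>2 else 0) = (\<Sum>w\<in>V. \<Sum>v\<in>V. if adj E v w then (x w)\<^sup>2 else 0)"
    by (rule sum.swap)
  also have "\<dots> = (\<Sum>v\<in>V. \<Sum>w\<in>V. if adj E v w then (x v)\<^sup>2 else 0)"
    by (intro sum.cong refl) (simp add: adj_sym)
  also have "(\<Sum>v\<in>V. \<Sum>w\<in>V. if adj E v w then (x v)\<^sup>2 else 0) = (\<Sum>v\<in>V. real (deg E v) * (x v)\<^sup>2)"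
  proof (intro sum.cong refl)
    fix v assume v: "v \<in> V"
    have "(\<Sum>w\<in>V. if adj E v w then (x v)\<^sup>2 else 0) = real (card {w\<in>V. adj E v w}) * (x v)\<^sup>2"
      by (simp add: sum.inter_filter[OF finV0, symmetric])
    then show "(\<Sum>w\<in>V. if adj E v w then (x v)\<^sup>2 else 0) = real (deg E v) * (x v)\<^sup>2"
      using deg_nb[OF gr0 v] by simp
  qed
  finally show ?thesis using Q by simp
qed

end

lemma pairs_pos:
  fixes F :: "'a \<Rightarrow> 'a \<Rightarrow> real" and \<sigma> :: "nat \<Rightarrow> 'a"
  assumes bij: "bij_betw \<sigma> {0..<n} V" and irr: "\<And>v. \<not> adj E v v"
    and Fs: "\<And>v w. F v w = F w v"
  shows "(\<Sum>(v,w)\<in>Sigma V (\<lambda>v. {w\<in>V. adj E v w}). F v w)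
       = 2 * (\<Sum>(i,j)\<in>{(i,j). i < j \<and> j < n \<and> adj E (\<sigma> i) (\<sigma> j)}. F (\<sigma> i) (\<sigma> j))"
proof -
  define P where "P = {(i,j). i < j \<and> j < n \<and> adj E (\<sigma> i) (\<sigma> j)}"
  define Q where "Q = {(i,j). i < n \<and> j < n \<and> adj E (\<sigma> i) (\<sigma> j)}"
  have inj: "inj_on \<sigma> {0..<n}" using bij_betw_imp_inj_on[OF bij] .
  have img: "\<sigma> ` {0..<n} = V" using bij_betw_imp_surj_on[OF bij] .
  have fQ: "finite Q" unfolding Q_def by (rule finite_subset[of _ "{0..<n} \<times> {0..<n}"]) auto
  have fP: "finite P" unfolding P_def by (rule finite_subset[of _ "{0..<n} \<times> {0..<n}"]) auto
  have "Sigma V (\<lambda>v. {w\<in>V. adj E v w}) = (\<lambda>(i,j). (\<sigma> i, \<sigma> j)) ` Q"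
  proof
    show "Sigma V (\<lambda>v. {w\<in>V. adj E v w}) \<subseteq> (\<lambda>(i,j). (\<sigma> i, \<sigma> j)) ` Q"
    proof
      fix p assume "p \<in> Sigma V (\<lambda>v. {w\<in>V. adj E v w})"
      then obtain v w where p: "p = (v,w)" "v \<in> V" "w \<in> V" "adj E v w" by auto
      obtain i j where "i < n" "j < n" "v = \<sigma> i" "w = \<sigma> j" using p img by force
      then show "p \<in> (\<lambda>(i,j). (\<sigma> i, \<sigma> j)) ` Q" using p unfolding Q_def by force
    qed
  qed (use img in \<open>auto simp: Q_def\<close>)
  moreover have "inj_on (\<lambda>(i,j). (\<sigma> i, \<sigma> j)) Q"
    using inj unfolding Q_def inj_on_def by auto
  ultimately have "(\<Sum>(v,w)\<in>Sigma V (\<lambda>v. {w\<in>V. adj E v w}). F v w) = (\<Sum>(i,j)\<in>Q. F (\<sigma> i) (\<sigma> j))"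
    by (simp add: sum.reindex case_prod_unfold)
  also have "Q = P \<union> (\<lambda>(i,j). (j,i)) ` P"
  proof
    show "Q \<subseteq> P \<union> (\<lambda>(i,j). (j,i)) ` P"
    proof
      fix p assume "p \<in> Q"
      then obtain i j where p: "p = (i,j)" "i < n" "j < n" "adj E (\<sigma> i) (\<sigma> j)" unfolding Q_def by auto
      then have "i \<noteq> j" using irr by auto
      then show "p \<in> P \<union> (\<lambda>(i,j). (j,i)) ` P"
        using p adj_sym[of E "\<sigma> i" "\<sigma> j"] unfolding P_def by (cases "i < j") (auto simp: image_iff)
    qed
  qed (auto simp: P_def Q_def adj_sym)
  also have "(\<Sum>(i,j)\<in>P \<union> (\<lambda>(i,j). (j,i)) ` P. F (\<sigma> i) (\<sigma> j))
      = (\<Sum>(i,j)\<in>P. F (\<sigma> i) (\<sigma> j)) + (\<Sum>(i,j)\<in>(\<lambda>(i,j). (j,i)) ` P. F (\<sigma> i) (\<sigma> j))"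
    by (rule sum.union_disjoint) (use fP in \<open>auto simp: P_def\<close>)
  also have "(\<Sum>(i,j)\<in>(\<lambda>(i,j). (j,i)) ` P. F (\<sigma> i) (\<sigma> j)) = (\<Sum>(i,j)\<in>P. F (\<sigma> i) (\<sigma> j))"
    by (subst sum.reindex) (auto simp: inj_on_def Fs case_prod_unfold)
  finally show ?thesis unfolding P_def by simp
qed



lemma tele_gen: fixes g :: "nat \<Rightarrow> real"
  shows "i \<le> k \<Longrightarrow> (\<Sum>m\<in>{Suc i..k}. g (m - 1) - g m) = g i - g k"
proof (induction k rule: dec_induct)
  case base then show ?case by simp
next
  case (step k)
  have "{Suc i..Suc k} = insert (Suc k) {Suc i..k}" using step by auto
  then show ?case using step by simp
qed

lemma tele: fixes a :: "nat \<Rightarrow> real" assumes "i \<le> j"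
  shows "(a i - a j)\<^sup>2 = (\<Sum>m\<in>{Suc i..j}. (a (m - 1) - a m) * (a (m - 1) + a m - 2 * a j))"
proof -
  have "(\<Sum>m\<in>{Suc i..j}. (a (m - 1) - a m) * (a (m - 1) + a m - 2 * a j))
      = (\<Sum>m\<in>{Suc i..j}. (a (m - 1) - a j)\<^sup>2 - (a m - a j)\<^sup>2)"
    by (intro sum.cong refl) (simp add: power2_eq_square algebra_simps)
  also have "\<dots> = (a i - a j)\<^sup>2 - (a j - a j)\<^sup>2"
    using tele_gen[OF assms, of "\<lambda>m. (a m - a j)\<^sup>2"] by simp
  finally show ?thesis by simp
qed

definition wt :: "(nat \<Rightarrow> real) \<Rightarrow> nat \<Rightarrow> nat \<Rightarrow> real" where
  "wt a m j = a (m - 1) + a m - 2 * a j"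

definition cutP :: "(nat \<times> nat) set \<Rightarrow> nat \<Rightarrow> (nat \<times> nat) set" where
  "cutP P m = {p \<in> P. fst p < m \<and> m \<le> snd p}"

lemma decomp: fixes a :: "nat \<Rightarrow> real"
  assumes fP: "finite P" and P: "\<And>i j. (i,j) \<in> P \<Longrightarrow> i < j \<and> j < n"
  shows "(\<Sum>(i,j)\<in>P. (a i - a j)\<^sup>2) = (\<Sum>m\<in>{1..<n}. (a (m - 1) - a m) * (\<Sum>p\<in>cutP P m. wt a m (snd p)))"
proof -
  have "(\<Sum>(i,j)\<in>P. (a i - a j)\<^sup>2) = (\<Sum>p\<in>P. \<Sum>m\<in>{1..<n}. if fst p < m \<and> m \<le> snd p then (a (m - 1) - a m) * wt a m (snd p) else 0)"
  proof (intro sum.cong refl)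
    fix p assume "p \<in> P"
    then obtain i j where p: "p = (i,j)" "i < j" "j < n" using P by (cases p) auto
    have se: "{Suc i..j} = {m\<in>{1..<n}. i < m \<and> m \<le> j}" using p by auto
    have "(\<Sum>m\<in>{1..<n}. if fst p < m \<and> m \<le> snd p then (a (m - 1) - a m) * wt a m (snd p) else 0)
        = (\<Sum>m\<in>{m\<in>{1..<n}. i < m \<and> m \<le> j}. (a (m - 1) - a m) * wt a m j)"
      unfolding p(1) fst_conv snd_conv by (subst sum.inter_filter) auto
    also have "\<dots> = (a i - a j)\<^sup>2" unfolding se[symmetric] wt_def using tele[of i j a] p by simp
    finally show "(case p of (i, j) \<Rightarrow> (a i - a j)\<^sup>2) = (\<Sum>m\<in>{1..<n}. if fst p < m \<and> m \<le> snd p then (a (m - 1) - a m) * wt a m (snd p) else 0)"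
      using p by simp
  qed
  also have "\<dots> = (\<Sum>m\<in>{1..<n}. \<Sum>p\<in>P. if fst p < m \<and> m \<le> snd p then (a (m - 1) - a m) * wt a m (snd p) else 0)"
    by (rule sum.swap)
  also have "\<dots> = (\<Sum>m\<in>{1..<n}. (a (m - 1) - a m) * (\<Sum>p\<in>cutP P m. wt a m (snd p)))"
    unfolding cutP_def by (simp add: sum.inter_filter[OF fP] sum_distrib_left if_distrib[of "\<lambda>t. _ * t"] cong: if_cong)
  finally show ?thesis .
qed

lemma sum_min_interval:
  fixes h :: "nat \<Rightarrow> real"
  assumes mono: "\<And>j j'. m \<le> j \<Longrightarrow> j \<le> j' \<Longrightarrow> j' < n \<Longrightarrow> h j \<le> h j'"
    and nn: "\<And>j. m \<le> j \<Longrightarrow> j < n \<Longrightarrow> 0 \<le> h j"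
  shows "Y \<subseteq> {m..<n} \<Longrightarrow> N \<le> card Y \<Longrightarrow> (\<Sum>j\<in>{m..<m+N}. h j) \<le> (\<Sum>j\<in>Y. h j)"
proof (induction N arbitrary: Y)
  case 0 then show ?case using nn by (simp add: subset_eq sum_nonneg)
next
  case (Suc N)
  have fY: "finite Y" using Suc.prems(1) finite_subset by blast
  then have ne: "Y \<noteq> {}" using Suc.prems(2) by auto
  define M where "M = Max Y"
  have MY: "M \<in> Y" unfolding M_def using fY ne by simp
  have "Y \<subseteq> {m..M}" unfolding M_def using Suc.prems(1) fY by auto
  then have "card Y \<le> card {m..M}" by (intro card_mono) auto
  then have MN: "m + N \<le> M" using Suc.prems(2) by simp
  have Mn: "M < n" using MY Suc.prems(1) by auto
  have IH: "(\<Sum>j\<in>{m..<m+N}. h j) \<le> (\<Sum>j\<in>Y - {M}. h j)"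
    by (rule Suc.IH) (use Suc.prems MY fY in auto)
  have "(\<Sum>j\<in>{m..<m + Suc N}. h j) = (\<Sum>j\<in>{m..<m+N}. h j) + h (m + N)" by simp
  also have "\<dots> \<le> (\<Sum>j\<in>Y - {M}. h j) + h M" using IH mono[of "m + N" M] MN Mn by simp
  also have "\<dots> = (\<Sum>j\<in>Y. h j)" using MY fY by (simp add: sum.remove)
  finally show ?case .
qed

lemma compare:
  fixes a :: "nat \<Rightarrow> real"
  assumes fP: "finite P" and P: "\<And>i j. (i,j) \<in> P \<Longrightarrow> i < j \<and> j < n"
    and fQ: "finite Q" and Q: "\<And>i j. (i,j) \<in> Q \<Longrightarrow> i < j \<and> j < n"
    and anti: "\<And>i j. i \<le> j \<Longrightarrow> j < n \<Longrightarrow> a j \<le> a i"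
    and cut: "\<And>m. 1 \<le> m \<Longrightarrow> m < n \<Longrightarrow> a m < a (m - 1) \<Longrightarrow>
        (\<Sum>p\<in>cutP Q m. wt a m (snd p)) \<le> (\<Sum>p\<in>cutP P m. wt a m (snd p))"
  shows "(\<Sum>(i,j)\<in>Q. (a i - a j)\<^sup>2) \<le> (\<Sum>(i,j)\<in>P. (a i - a j)\<^sup>2)"
proof -
  have "(\<Sum>m\<in>{1..<n}. (a (m - 1) - a m) * (\<Sum>p\<in>cutP Q m. wt a m (snd p)))
      \<le> (\<Sum>m\<in>{1..<n}. (a (m - 1) - a m) * (\<Sum>p\<in>cutP P m. wt a m (snd p)))"
  proof (rule sum_mono)
    fix m assume m: "m \<in> {1..<n}"
    have "a m \<le> a (m - 1)" using anti m by auto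
    then show "(a (m - 1) - a m) * (\<Sum>p\<in>cutP Q m. wt a m (snd p)) \<le> (a (m - 1) - a m) * (\<Sum>p\<in>cutP P m. wt a m (snd p))"
      using cut[of m] m by (cases "a m < a (m - 1)") (auto intro: mult_left_mono)
  qed
  then show ?thesis using decomp[OF fP P] decomp[OF fQ Q] by simp
qed

lemma cut_lower:
  fixes a :: "nat \<Rightarrow> real"
  assumes fP: "finite P" and P: "\<And>i j. (i,j) \<in> P \<Longrightarrow> i < j \<and> j < n"
    and anti: "\<And>i j. i \<le> j \<Longrightarrow> j < n \<Longrightarrow> a j \<le> a i"
    and m: "1 \<le> m" "m < n"
    and N: "N \<le> card (snd ` cutP P m)"
  shows "(\<Sum>j\<in>{m..<m+N}. wt a m j) \<le> (\<Sum>p\<in>cutP P m. wt a m (snd p))"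
proof -
  have sub: "snd ` cutP P m \<subseteq> {m..<n}" unfolding cutP_def using P by force
  have "(\<Sum>j\<in>{m..<m+N}. wt a m j) \<le> (\<Sum>j\<in>snd ` cutP P m. wt a m j)"
  proof (rule sum_min_interval[OF _ _ sub N])
    fix j j' assume "m \<le> j" "j \<le> j'" "j' < n"
    then show "wt a m j \<le> wt a m j'" unfolding wt_def using anti[of j j'] by simp
  next
    fix j assume j: "m \<le> j" "j < n"
    then have "m - 1 \<le> j" by simp
    then show "0 \<le> wt a m j" unfolding wt_def using anti[of m j] anti[of "m - 1" j] j by simp
  qed
  also have "\<dots> \<le> (\<Sum>p\<in>cutP P m. wt a m (snd p))"
  proof -
    have "finite (cutP P m)" using fP unfolding cutP_def by simp
    moreover have "\<And>p. p \<in> cutP P m \<Longrightarrow> 0 \<le> wt a m (snd p)"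
    proof -
      fix p assume "p \<in> cutP P m"
      then have "m \<le> snd p" "snd p < n" unfolding cutP_def using P by (cases p; force)+
      moreover have "m - 1 \<le> snd p" using \<open>m \<le> snd p\<close> by simp
      ultimately show "0 \<le> wt a m (snd p)" unfolding wt_def using anti[of m "snd p"] anti[of "m - 1" "snd p"] by simp
    qed
    ultimately show ?thesis using sum_image_le[of "cutP P m" "wt a m" snd] by (simp add: o_def)
  qed
  finally show ?thesis .
qed



lemma sum_take_nth: "k \<le> length xs \<Longrightarrow> sum_list (take k xs) = (\<Sum>l<k. xs ! l)"
  by (simp add: sum_list_sum_nth atLeast0LessThan min_def)

locale dseq =
  fixes ds :: "nat list" and n kk :: nat
  assumes len: "length ds = n"
    and big: "\<And>i. i < kk \<Longrightarrow> 2 \<le> ds ! i"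
    and one: "\<And>i. kk \<le> i \<Longrightarrow> i < n \<Longrightarrow> ds ! i = 1"
    and srt: "sorted (take kk ds)"
    and sm: "sum_list ds = 2 * (n - 1)"
    and kk: "1 \<le> kk" "kk < n"
begin

definition S where "S i = (\<Sum>l<Suc i. ds ! l)"
definition C where "C i = S i - i"
definition p where "p j = (LEAST i. j \<le> C i)"

lemma ds_pos: "i < n \<Longrightarrow> 1 \<le> ds ! i"
  using big one by (cases "i < kk") force+

lemma S_Suc: "S (Suc i) = S i + ds ! Suc i"
  unfolding S_def by simp

lemma S_ge: "i < n \<Longrightarrow> Suc i + min (Suc i) kk \<le> S i"
proof (induction i)
  case 0 then show ?case using big[of 0] kk ds_pos[of 0] unfolding S_def by auto
next
  case (Suc i)
  then have "Suc i + min (Suc i) kk \<le> S i" by simp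
  moreover have "(if Suc i < kk then 2 else 1) \<le> ds ! Suc i" using big ds_pos Suc.prems by auto
  ultimately show ?case unfolding S_Suc by (auto simp: min_def split: if_splits)
qed

lemma S_last: "S (n - 1) = 2 * (n - 1)"
proof -
  have "sum_list ds = (\<Sum>l<n. ds ! l)" using sum_take_nth[of n ds] len by simp
  then show ?thesis unfolding S_def using sm kk by simp
qed

lemma S_tail: assumes "kk \<le> j" "j < n" shows "S (j - 1) + (n - j) = 2 * (n - 1)"
proof -
  have "(\<Sum>l<n. ds ! l) = (\<Sum>l<j. ds ! l) + (\<Sum>l\<in>{j..<n}. ds ! l)"
    using assms by (metis atLeast0LessThan le_less_trans less_imp_le_nat sum.atLeastLessThan_concat zero_le)
  moreover have "(\<Sum>l\<in>{j..<n}. ds ! l) = n - j" using one assms by simp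
  moreover have "(\<Sum>l<j. ds ! l) = S (j - 1)" unfolding S_def using assms kk by simp
  ultimately show ?thesis using S_last unfolding S_def using kk by simp
qed

lemma C_Suc: "Suc i < n \<Longrightarrow> C (Suc i) = C i + ds ! Suc i - 1"
  unfolding C_def using S_Suc S_ge[of i] ds_pos[of "Suc i"] by auto

lemma C_mono: "i \<le> i' \<Longrightarrow> i' < n \<Longrightarrow> C i \<le> C i'"
proof (induction i' rule: dec_induct)
  case base then show ?case by simp
next
  case (step k) then show ?case using C_Suc[of k] ds_pos[of "Suc k"] by simp
qed

lemma C_last: "C (n - 1) = n - 1"
  unfolding C_def using S_last by simp

lemma C0: "C 0 = ds ! 0" unfolding C_def S_def by simp

lemma C_le: "i < n \<Longrightarrow> C i \<le> n - 1"
  using C_mono[of i "n - 1"] C_last by simp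

lemma C_big: assumes "1 \<le> j" "j < n" shows "j \<le> C (j - 1)"
proof (cases "j \<le> kk")
  case True
  then have "j + j \<le> S (j - 1)" using S_ge[of "j - 1"] assms by (simp add: min_def)
  then show ?thesis unfolding C_def by simp
next
  case False
  then have "S (j - 1) + (n - j) = 2 * (n - 1)" using S_tail assms by simp
  then show ?thesis unfolding C_def using assms by simp
qed

lemma p_le_iff: assumes "j < n" "i < n" shows "p j \<le> i \<longleftrightarrow> j \<le> C i"
proof
  have ex: "j \<le> C (n - 1)" using C_last assms by simp
  have pj: "j \<le> C (p j)" unfolding p_def by (rule LeastI[where P="\<lambda>i. j \<le> C i", OF ex])
  assume "p j \<le> i"
  then show "j \<le> C i" using C_mono[of "p j" i] pj assms by simp
next
  assume "j \<le> C i"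
  then show "p j \<le> i" unfolding p_def by (rule Least_le)
qed

lemma p_lt: assumes "j < n" shows "p j < n"
proof -
  have "j \<le> C (n - 1)" using assms C_last by simp
  then have "p j \<le> n - 1" using p_le_iff[of j "n - 1"] assms by simp
  then show ?thesis using kk by simp
qed

lemma p_less: assumes "1 \<le> j" "j < n" shows "p j < j"
proof -
  have "p j \<le> j - 1" using p_le_iff[of j "j - 1"] C_big[OF assms] assms by simp
  then show ?thesis using assms by simp
qed

lemma p_mono: "j \<le> j' \<Longrightarrow> j' < n \<Longrightarrow> p j \<le> p j'"
  using p_le_iff[of j "p j'"] p_le_iff[of j' "p j'"] p_lt[of j'] by simp

lemma p_cut: assumes "1 \<le> m" "m < n"
  shows "{j\<in>{1..<n}. p j < m \<and> m \<le> j} = {m..C (m - 1)}"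
proof -
  have "\<And>j. j < n \<Longrightarrow> p j < m \<longleftrightarrow> j \<le> C (m - 1)"
  proof -
    fix j assume j: "j < n"
    have "p j < m \<longleftrightarrow> p j \<le> m - 1" using assms by auto
    then show "p j < m \<longleftrightarrow> j \<le> C (m - 1)" using p_le_iff[OF j, of "m - 1"] assms by simp
  qed
  moreover have "C (m - 1) < n"
  proof -
    have "m - 1 < n" using assms by simp
    then have "C (m - 1) \<le> n - 1" by (rule C_le)
    then show ?thesis using assms by simp
  qed
  ultimately show ?thesis using assms by auto
qed

lemma p_count: assumes "i < n"
  shows "card {j\<in>{1..<n}. p j = i} + (if i = 0 then 0 else 1) = ds ! i"
proof (cases "i = 0")
  case True
  have "{j\<in>{1..<n}. p j = i} = {1..C 0}"
  proof -
    have "\<And>j. j < n \<Longrightarrow> p j = 0 \<longleftrightarrow> j \<le> C 0" using p_le_iff[of _ 0] kk by simp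
    then show ?thesis using True C_le[of 0] kk by auto
  qed
  then show ?thesis using True C0 by simp
next
  case False
  have "{j\<in>{1..<n}. p j = i} = {Suc (C (i - 1))..C i}"
  proof -
    have iff: "\<And>j. j < n \<Longrightarrow> p j = i \<longleftrightarrow> j \<le> C i \<and> \<not> j \<le> C (i - 1)"
    proof -
      fix j assume j: "j < n"
      have "p j = i \<longleftrightarrow> p j \<le> i \<and> \<not> p j \<le> i - 1" using False by auto
      then show "p j = i \<longleftrightarrow> j \<le> C i \<and> \<not> j \<le> C (i - 1)"
        using p_le_iff[OF j, of i] p_le_iff[OF j, of "i - 1"] assms by simp
    qed
    have Ci: "C i \<le> n - 1" using C_le[OF assms] .
    show ?thesis
    proof (intro set_eqI iffI)
      fix j assume "j \<in> {j\<in>{1..<n}. p j = i}"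
      then show "j \<in> {Suc (C (i - 1))..C i}" using iff[of j] by auto
    next
      fix j assume j: "j \<in> {Suc (C (i - 1))..C i}"
      then have "j < n" using Ci assms by auto
      then show "j \<in> {j\<in>{1..<n}. p j = i}" using iff[of j] j by auto
    qed
  qed
  moreover have "C i = C (i - 1) + ds ! i - 1" using C_Suc[of "i - 1"] False assms by simp
  ultimately show ?thesis using False ds_pos[OF assms] by simp
qed

end



lemma walk_join: assumes "walk E xs" "walk E ys" "last xs = hd ys"
  shows "walk E (xs @ tl ys) \<and> hd (xs @ tl ys) = hd xs \<and> last (xs @ tl ys) = last ys"
proof (cases "tl ys = []")
  case True
  then have "ys = [hd ys]" using assms(2) unfolding walk_def by (cases ys) auto
  then show ?thesis using assms True by (metis append_Nil2 last_ConsL)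
next
  case False
  then obtain y z zs where ys: "ys = y # z # zs" using assms(2) unfolding walk_def
    by (cases ys; cases "tl ys") auto
  have "walk E (z # zs)" "adj E y z" using assms(2) ys by (auto simp: walk_Cons)
  then have "walk E (xs @ (z # zs))" using assms(1,3) ys by (intro walk_append) auto
  moreover have "xs \<noteq> []" using assms(1) unfolding walk_def by simp
  ultimately show ?thesis using ys by simp
qed

locale greedy = dseq +
  fixes V :: "'a set" and \<sigma> :: "nat \<Rightarrow> 'a"
  assumes bij: "bij_betw \<sigma> {0..<n} V"
begin

definition Es where "Es = (\<lambda>j. {\<sigma> j, \<sigma> (p j)}) ` {1..<n}"

lemma sinj: "inj_on \<sigma> {0..<n}" using bij_betw_imp_inj_on[OF bij] .
lemma simg: "\<sigma> ` {0..<n} = V" using bij_betw_imp_surj_on[OF bij] .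
lemma seq: "a < n \<Longrightarrow> b < n \<Longrightarrow> \<sigma> a = \<sigma> b \<longleftrightarrow> a = b"
  using sinj unfolding inj_on_def by auto
lemma memV: "v \<in> V \<Longrightarrow> \<exists>a<n. v = \<sigma> a" using simg by auto
lemma finV: "finite V" using simg by auto

lemma adj_iff: assumes "a < n" "b < n"
  shows "adj Es (\<sigma> a) (\<sigma> b) \<longleftrightarrow> (1 \<le> a \<and> b = p a) \<or> (1 \<le> b \<and> a = p b)"
proof
  assume "adj Es (\<sigma> a) (\<sigma> b)"
  then obtain j where j: "1 \<le> j" "j < n" "{\<sigma> a, \<sigma> b} = {\<sigma> j, \<sigma> (p j)}"
    unfolding adj_def Es_def by auto
  have pj: "p j < n" using p_lt j by simp
  from j(3) have "(\<sigma> a = \<sigma> j \<and> \<sigma> b = \<sigma> (p j)) \<or> (\<sigma> a = \<sigma> (p j) \<and> \<sigma> b = \<sigma> j)"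
    by (auto simp: doubleton_eq_iff)
  then have "(a = j \<and> b = p j) \<or> (a = p j \<and> b = j)" using seq assms j pj by auto
  then show "(1 \<le> a \<and> b = p a) \<or> (1 \<le> b \<and> a = p b)" using j by auto
next
  assume "(1 \<le> a \<and> b = p a) \<or> (1 \<le> b \<and> a = p b)"
  then show "adj Es (\<sigma> a) (\<sigma> b)" unfolding adj_def Es_def using assms
    by (auto simp: insert_commute image_iff)
qed

lemma adj_ex: assumes "adj Es x y" shows "\<exists>a<n. \<exists>b<n. x = \<sigma> a \<and> y = \<sigma> b"
proof -
  obtain j where "1 \<le> j" "j < n" "{x, y} = {\<sigma> j, \<sigma> (p j)}"
    using assms unfolding adj_def Es_def by auto
  moreover have "p j < n" using p_lt \<open>j < n\<close> by simp
  ultimately show ?thesis by (auto simp: doubleton_eq_iff)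
qed

lemma graph: "graph V Es"
  unfolding graph_def
proof (intro conjI ballI)
  show "finite V" by (rule finV)
  fix e assume "e \<in> Es"
  then obtain j where j: "1 \<le> j" "j < n" "e = {\<sigma> j, \<sigma> (p j)}" unfolding Es_def by auto
  have "p j < j" using p_less j by simp
  then have "\<sigma> j \<noteq> \<sigma> (p j)" using seq[of j "p j"] j by simp
  then show "card e = 2" using j by simp
  show "e \<subseteq> V" using j simg p_lt[of j] by auto
qed

lemma walk_root: "j < n \<Longrightarrow> \<exists>xs. walk Es xs \<and> hd xs = \<sigma> j \<and> last xs = \<sigma> 0"
proof (induction j rule: less_induct)
  case (less j)
  show ?case
  proof (cases "j = 0")
    case True then show ?thesis by (intro exI[of _ "[\<sigma> 0]"]) simp
  next
    case False
    then have pj: "p j < j" using p_less less.prems by simp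
    then obtain xs where xs: "walk Es xs" "hd xs = \<sigma> (p j)" "last xs = \<sigma> 0" using less by auto
    have "adj Es (\<sigma> j) (\<sigma> (p j))" using adj_iff[of j "p j"] less.prems pj False by simp
    then have "walk Es (\<sigma> j # xs)" using xs by (simp add: walk_Cons)
    moreover have "xs \<noteq> []" using xs unfolding walk_def by simp
    ultimately show ?thesis using xs by (intro exI[of _ "\<sigma> j # xs"]) simp
  qed
qed

lemma connected: "connected_graph V Es"
  unfolding connected_graph_def
proof (intro ballI)
  fix v w assume "v \<in> V" "w \<in> V"
  then obtain a b where ab: "a < n" "b < n" "v = \<sigma> a" "w = \<sigma> b" using memV by blast
  obtain xs where xs: "walk Es xs" "hd xs = \<sigma> a" "last xs = \<sigma> 0" using walk_root ab by blast
  obtain ys where ys: "walk Es ys" "hd ys = \<sigma> b" "last ys = \<sigma> 0" using walk_root ab by blast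
  have "walk Es (rev ys)" "hd (rev ys) = \<sigma> 0" "last (rev ys) = \<sigma> b"
    using ys walk_rev by (auto simp: hd_rev last_rev)
  then show "\<exists>xs. walk Es xs \<and> hd xs = v \<and> last xs = w"
    using walk_join[OF xs(1) \<open>walk Es (rev ys)\<close>] xs ab by auto
qed

lemma acyclic: "\<not> has_cycle Es"
proof
  assume "has_cycle Es"
  then obtain xs where xs: "3 \<le> length xs" "distinct xs" "walk Es xs" "adj Es (last xs) (hd xs)"
    unfolding has_cycle_def by blast
  define L where "L = length xs"
  define nx where "nx k = (if k = L - 1 then 0 else Suc k)" for k
  have cyc: "\<And>k. k < L \<Longrightarrow> adj Es (xs ! k) (xs ! nx k)"
  proof -
    fix k assume k: "k < L"
    show "adj Es (xs ! k) (xs ! nx k)"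
    proof (cases "k = L - 1")
      case True
      have ne: "xs \<noteq> []" using xs(1) by auto
      then have "xs ! k = last xs" "xs ! nx k = hd xs" using True unfolding nx_def L_def
        by (simp_all add: last_conv_nth hd_conv_nth)
      then show ?thesis using xs(4) by simp
    next
      case False
      then show ?thesis using xs(3) k unfolding walk_def nx_def L_def by simp
    qed
  qed
  have inV: "\<And>k. k < L \<Longrightarrow> \<exists>a<n. xs ! k = \<sigma> a"
    using cyc adj_ex by blast
  define pos where "pos k = (SOME a. a < n \<and> xs ! k = \<sigma> a)" for k
  have pos: "\<And>k. k < L \<Longrightarrow> pos k < n \<and> xs ! k = \<sigma> (pos k)"
    unfolding pos_def by (rule someI_ex) (use inV in blast)
  obtain i where i: "i < L" "\<And>k. k < L \<Longrightarrow> pos k \<le> pos i"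
  proof -
    have "finite (pos ` {..<L})" by simp
    moreover have "0 \<in> {..<L}" using xs(1) unfolding L_def by (cases xs) auto
    then have "pos ` {..<L} \<noteq> {}" by blast
    note this calculation
    then obtain i where "i < L" "pos i = Max (pos ` {..<L})" by (metis Max_in imageE lessThan_iff)
    then show ?thesis using that by (metis Max_ge \<open>finite (pos ` {..<L})\<close> image_eqI lessThan_iff)
  qed
  define c where "c = pos i"
  have nb: "\<And>k. k < L \<Longrightarrow> k \<noteq> i \<Longrightarrow> adj Es (xs ! i) (xs ! k) \<Longrightarrow> pos k = p c"
  proof -
    fix k assume k: "k < L" "k \<noteq> i" "adj Es (xs ! i) (xs ! k)"
    have ne: "pos k \<noteq> c"
      using k i pos[of k] pos[of i] xs(2) unfolding c_def L_def by (metis nth_eq_iff_index_eq)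
    have le: "pos k \<le> c" using i(2)[OF k(1)] unfolding c_def .
    have "adj Es (\<sigma> c) (\<sigma> (pos k))" using k(3) pos[of k] pos[OF i(1)] k(1) unfolding c_def by simp
    then have "(1 \<le> c \<and> pos k = p c) \<or> (1 \<le> pos k \<and> c = p (pos k))"
      using adj_iff pos[of k] pos[OF i(1)] k(1) unfolding c_def by simp
    moreover have "\<not> (1 \<le> pos k \<and> c = p (pos k))"
      using p_less[of "pos k"] pos[of k] k(1) le by auto
    ultimately show "pos k = p c" by blast
  qed
  define k1 where "k1 = nx i"
  define k2 where "k2 = (if i = 0 then L - 1 else i - 1)"
  have L3: "3 \<le> L" using xs(1) unfolding L_def .
  have k1: "k1 < L" "k1 \<noteq> i" unfolding k1_def nx_def using i(1) L3 by auto
  have k2: "k2 < L" "k2 \<noteq> i" "nx k2 = i" unfolding k2_def nx_def using i(1) L3 by auto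
  have k12: "k1 \<noteq> k2" unfolding k1_def k2_def nx_def using i(1) L3 by auto
  have a1: "adj Es (xs ! i) (xs ! k1)" using cyc[OF i(1)] unfolding k1_def .
  have a2: "adj Es (xs ! i) (xs ! k2)" using cyc[OF k2(1)] k2(3) adj_sym by metis
  have "pos k1 = pos k2" using nb[OF k1 a1] nb[OF k2(1,2) a2] by simp
  then have "xs ! k1 = xs ! k2" using pos[OF k1(1)] pos[OF k2(1)] by simp
  then show False using k12 k1(1) k2(1) xs(2) unfolding L_def by (simp add: nth_eq_iff_index_eq)
qed

lemma inc_edges: assumes "i < n"
  shows "{e \<in> Es. \<sigma> i \<in> e} = (\<lambda>j. {\<sigma> j, \<sigma> (p j)}) ` {j\<in>{1..<n}. j = i \<or> p j = i}"
proof
  show "{e \<in> Es. \<sigma> i \<in> e} \<subseteq> (\<lambda>j. {\<sigma> j, \<sigma> (p j)}) ` {j\<in>{1..<n}. j = i \<or> p j = i}"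
  proof
    fix e assume "e \<in> {e \<in> Es. \<sigma> i \<in> e}"
    then obtain j where j: "1 \<le> j" "j < n" "e = {\<sigma> j, \<sigma> (p j)}" "\<sigma> i \<in> e" unfolding Es_def by auto
    then have "i = j \<or> i = p j" using seq[of i j] seq[of i "p j"] p_lt[of j] assms by auto
    then show "e \<in> (\<lambda>j. {\<sigma> j, \<sigma> (p j)}) ` {j\<in>{1..<n}. j = i \<or> p j = i}" using j by auto
  qed
qed (auto simp: Es_def)

lemma edge_inj: "inj_on (\<lambda>j. {\<sigma> j, \<sigma> (p j)}) {1..<n}"
proof (rule inj_onI)
  fix j j' assume j: "j \<in> {1..<n}" "j' \<in> {1..<n}" "{\<sigma> j, \<sigma> (p j)} = {\<sigma> j', \<sigma> (p j')}"
  have pl: "p j < j" "p j' < j'" using p_less j by auto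
  show "j = j'"
  proof (rule ccontr)
    assume "j \<noteq> j'"
    then have "\<sigma> j = \<sigma> (p j')" "\<sigma> (p j) = \<sigma> j'" using j(3) seq[of j j'] j(1,2) by (auto simp: doubleton_eq_iff)
    then have "j = p j'" "p j = j'" using seq j(1,2) pl by auto
    then show False using pl by simp
  qed
qed

lemma deg_sigma: assumes "i < n" shows "deg Es (\<sigma> i) = ds ! i"
proof -
  have "deg Es (\<sigma> i) = card {j\<in>{1..<n}. j = i \<or> p j = i}"
    unfolding deg_def inc_edges[OF assms]
    by (rule card_image) (rule inj_on_subset[OF edge_inj], auto)
  also have "{j\<in>{1..<n}. j = i \<or> p j = i} = {j\<in>{1..<n}. p j = i} \<union> {j\<in>{1..<n}. j = i}" by auto
  also have "card \<dots> = card {j\<in>{1..<n}. p j = i} + card {j\<in>{1..<n}. j = i}"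
  proof (rule card_Un_disjoint)
    show "{j\<in>{1..<n}. p j = i} \<inter> {j\<in>{1..<n}. j = i} = {}" using p_less[of i] by auto
  qed auto
  also have "card {j\<in>{1..<n}. j = i} = (if i = 0 then 0 else 1)"
  proof (cases "i = 0")
    case False
    then have "{j\<in>{1..<n}. j = i} = {i}" using assms by auto
    then show ?thesis using False by simp
  qed (auto simp: card_eq_0_iff)
  finally show ?thesis using p_count[OF assms] by simp
qed

lemma interior_eq: "Defs.interior V Es = \<sigma> ` {0..<kk}"
proof -
  have "\<And>i. i < n \<Longrightarrow> 2 \<le> ds ! i \<longleftrightarrow> i < kk" using big one by (metis le_antisym not_le one_le_numeral numeral_le_one_iff semiring_norm(69))
  then show ?thesis unfolding Defs.interior_def using simg deg_sigma kk by force
qed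

lemma boundary_eq: "boundary V Es = \<sigma> ` {kk..<n}"
proof -
  have "\<And>i. i < n \<Longrightarrow> ds ! i = 1 \<longleftrightarrow> kk \<le> i" using big one by (metis not_le numeral_le_one_iff semiring_norm(69))
  then show ?thesis unfolding boundary_def using simg deg_sigma kk by force
qed

lemma twb: "tree_with_boundary V Es"
  unfolding tree_with_boundary_def is_tree_def
proof (intro conjI)
  show "graph V Es" by (rule graph)
  show "V \<noteq> {}" using simg kk by auto
  show "connected_graph V Es" by (rule connected)
  show "\<not> has_cycle Es" by (rule acyclic)
  have "{0..<n} = {kk..<n} \<union> {0..<kk}" using kk by auto
  then show "V = boundary V Es \<union> Defs.interior V Es" unfolding interior_eq boundary_eq
    using simg by (metis image_Un)
  show "boundary V Es \<noteq> {}" unfolding boundary_eq using kk by auto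
  show "Defs.interior V Es \<noteq> {}" unfolding interior_eq using kk by auto
qed

lemma degseq: "deg_seq V Es = ds"
proof -
  have "image_mset (deg Es) (mset_set (\<sigma> ` {0..<kk})) = image_mset (deg Es \<circ> \<sigma>) (mset_set {0..<kk})"
    using inj_on_subset[OF sinj, of "{0..<kk}"] kk by (simp add: image_mset_mset_set[symmetric] multiset.map_comp)
  also have "\<dots> = image_mset (\<lambda>i. ds ! i) (mset_set {0..<kk})"
    using deg_sigma kk by (intro image_mset_cong) auto
  also have "\<dots> = mset (take kk ds)"
  proof -
    have "take kk ds = map (\<lambda>i. ds ! i) [0..<kk]" using len kk by (intro nth_equalityI) auto
    then show ?thesis by simp
  qed
  finally have a: "image_mset (deg Es) (mset_set (Defs.interior V Es)) = mset (take kk ds)"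
    unfolding interior_eq .
  have b: "card (boundary V Es) = n - kk"
    unfolding boundary_eq using inj_on_subset[OF sinj, of "{kk..<n}"] by (simp add: card_image)
  have "ds = take kk ds @ drop kk ds" by simp
  also have "drop kk ds = replicate (n - kk) 1"
    using one len by (intro nth_equalityI) auto
  finally have c: "ds = take kk ds @ replicate (n - kk) 1" .
  show ?thesis unfolding deg_seq_def a b using srt c by (simp add: sorted_sort_id)
qed

end



context greedy begin

lemma conn_Es: "conn V Es" by unfold_locales (rule graph, rule connected)

lemma tree_Es: "tree V Es (\<sigma> 0)"
proof -
  interpret conn V Es by (rule conn_Es)
  show ?thesis by unfold_locales (use acyclic simg kk in auto)
qed

sublocale gt: tree V Es "\<sigma> 0" by (rule tree_Es)

lemma hpar: "1 \<le> j \<Longrightarrow> j < n \<Longrightarrow> gt.par (\<sigma> j) = \<sigma> (p j) \<and> gt.h (\<sigma> j) = Suc (gt.h (\<sigma> (p j)))"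
proof (induction j rule: less_induct)
  case (less j)
  have pj: "p j < j" using p_less less.prems by simp
  have a: "adj Es (\<sigma> j) (\<sigma> (p j))" using adj_iff[of j "p j"] less.prems pj by simp
  from gt.edge_par[OF a] show ?case
  proof
    assume "\<sigma> j \<noteq> \<sigma> 0 \<and> \<sigma> (p j) = gt.par (\<sigma> j) \<and> gt.h (\<sigma> j) = Suc (gt.h (\<sigma> (p j)))"
    then show ?thesis by simp
  next
    assume b: "\<sigma> (p j) \<noteq> \<sigma> 0 \<and> \<sigma> j = gt.par (\<sigma> (p j)) \<and> gt.h (\<sigma> (p j)) = Suc (gt.h (\<sigma> j))"
    have "p j \<noteq> 0"
    proof
      assume "p j = 0"
      then show False using b by simp
    qed
    then have "gt.par (\<sigma> (p j)) = \<sigma> (p (p j))" using less.IH[of "p j"] pj less.prems by simp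
    then have "\<sigma> j = \<sigma> (p (p j))" using b by simp
    then have "j = p (p j)" using seq[of j "p (p j)"] p_lt[of "p j"] less.prems pj by simp
    moreover have "p (p j) < p j" using p_less[of "p j"] \<open>p j \<noteq> 0\<close> pj less.prems by simp
    ultimately show ?thesis using pj by simp
  qed
qed

lemma h0': "gt.h (\<sigma> 0) = 0" using gt.hr .

lemma child_iff: assumes "a < n" "b < n"
  shows "child Es (\<sigma> 0) (\<sigma> a) (\<sigma> b) \<longleftrightarrow> 1 \<le> b \<and> p b = a"
proof -
  have c: "child Es (\<sigma> 0) (\<sigma> a) (\<sigma> b) \<longleftrightarrow> adj Es (\<sigma> a) (\<sigma> b) \<and> gt.h (\<sigma> b) = Suc (gt.h (\<sigma> a))"
    unfolding child_def gt.h_def ..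
  show ?thesis
  proof
    assume ch: "child Es (\<sigma> 0) (\<sigma> a) (\<sigma> b)"
    then have "(1 \<le> a \<and> b = p a) \<or> (1 \<le> b \<and> a = p b)" using c adj_iff assms by simp
    moreover have "\<not> (1 \<le> a \<and> b = p a)" using ch c hpar[of a] assms by auto
    ultimately show "1 \<le> b \<and> p b = a" by auto
  next
    assume "1 \<le> b \<and> p b = a"
    then show "child Es (\<sigma> 0) (\<sigma> a) (\<sigma> b)" using c adj_iff assms hpar[of b] by auto
  qed
qed

lemma h_mono: "b < n \<Longrightarrow> a \<le> b \<Longrightarrow> gt.h (\<sigma> a) \<le> gt.h (\<sigma> b)"
proof (induction b arbitrary: a rule: less_induct)
  case (less b)
  show ?case
  proof (cases "a = 0")
    case True then show ?thesis using h0' by simp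
  next
    case False
    then have "1 \<le> b" using less.prems by simp
    have "p a \<le> p b" using p_mono less.prems by simp
    moreover have "p b < b" using p_less \<open>1 \<le> b\<close> less.prems by simp
    ultimately have "gt.h (\<sigma> (p a)) \<le> gt.h (\<sigma> (p b))" using less.IH[of "p b" "p a"] less.prems by simp
    then show ?thesis using hpar[of a] hpar[of b] False \<open>1 \<le> b\<close> less.prems by simp
  qed
qed

definition rk where "rk = the_inv_into {0..<n} \<sigma>"

lemma rk: "a < n \<Longrightarrow> rk (\<sigma> a) = a"
  unfolding rk_def using the_inv_into_f_f[OF sinj] by simp

lemma rkV: "v \<in> V \<Longrightarrow> rk v < n \<and> \<sigma> (rk v) = v"
  using memV rk by force

lemma slo: "SLO_tree V Es"
  unfolding SLO_tree_def
proof (intro conjI exI)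
  show "tree_with_boundary V Es" by (rule twb)
  show "SLO_ordering V Es (\<sigma> 0) rk"
    unfolding SLO_ordering_def
  proof (intro conjI ballI impI allI)
    show "\<sigma> 0 \<in> V" using simg kk by auto
    show "inj_on rk V" unfolding rk_def using simg inj_on_the_inv_into[OF sinj] by simp
  next
    fix v w assume vw: "v \<in> V" "w \<in> V" "rk v < rk w"
    then show "gdist Es v (\<sigma> 0) \<le> gdist Es w (\<sigma> 0)"
      using h_mono[of "rk w" "rk v"] rkV[OF vw(1)] rkV[OF vw(2)] unfolding gt.h_def by simp
  next
    fix v1 v2 w1 w2 assume a: "v1 \<in> V" "v2 \<in> V" "rk v1 < rk v2" "w1 \<in> V" "w2 \<in> V"
      "child Es (\<sigma> 0) v1 w1" "child Es (\<sigma> 0) v2 w2"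
    have c1: "p (rk w1) = rk v1" using child_iff[of "rk v1" "rk w1"] rkV a by force
    have c2: "p (rk w2) = rk v2" using child_iff[of "rk v2" "rk w2"] rkV a by force
    show "rk w1 < rk w2"
    proof (rule ccontr)
      assume "\<not> rk w1 < rk w2"
      then have "p (rk w2) \<le> p (rk w1)" using p_mono rkV a by simp
      then show False using c1 c2 a by simp
    qed
  next
    fix v w assume a: "v \<in> V" "w \<in> V" "rk v < rk w" "v \<in> boundary V Es"
    then have "kk \<le> rk v" unfolding boundary_eq using rk by auto
    moreover have "rk w < n" "\<sigma> (rk w) = w" using rkV[OF a(2)] by auto
    ultimately show "w \<in> boundary V Es" unfolding boundary_eq using a(3)
      by (metis atLeastLessThan_iff image_eqI less_imp_le_nat order.strict_trans1)
  next
    fix v w assume a: "v \<in> Defs.interior V Es" "w \<in> Defs.interior V Es" "rk v < rk w"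
    then obtain i j where ij: "i < kk" "j < kk" "v = \<sigma> i" "w = \<sigma> j" unfolding interior_eq by auto
    then have "i < j" using a rk kk by simp
    then have "take kk ds ! i \<le> take kk ds ! j" using srt ij len kk by (intro sorted_nth_mono) auto
    then show "deg Es v \<le> deg Es w" using deg_sigma ij kk by simp
  qed
qed

definition PS where "PS = {(i,j). i < j \<and> j < n \<and> adj Es (\<sigma> i) (\<sigma> j)}"

lemma PS_eq: "PS = (\<lambda>j. (p j, j)) ` {1..<n}"
proof
  show "PS \<subseteq> (\<lambda>j. (p j, j)) ` {1..<n}"
  proof
    fix q assume "q \<in> PS"
    then obtain i j where q: "q = (i,j)" "i < j" "j < n" "adj Es (\<sigma> i) (\<sigma> j)" unfolding PS_def by auto
    then have "(1 \<le> i \<and> j = p i) \<or> (1 \<le> j \<and> i = p j)" using adj_iff by simp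
    moreover have "\<not> (1 \<le> i \<and> j = p i)" using p_less[of i] q by auto
    ultimately show "q \<in> (\<lambda>j. (p j, j)) ` {1..<n}" using q by auto
  qed
next
  show "(\<lambda>j. (p j, j)) ` {1..<n} \<subseteq> PS"
    unfolding PS_def using adj_iff p_less p_lt by auto
qed

lemma PS_cut: assumes "1 \<le> m" "m < n"
  shows "(\<Sum>q\<in>cutP PS m. wt a m (snd q)) = (\<Sum>j\<in>{m..C (m - 1)}. wt a m j)"
proof -
  have "cutP PS m = (\<lambda>j. (p j, j)) ` {j\<in>{1..<n}. p j < m \<and> m \<le> j}"
    unfolding cutP_def PS_eq by auto
  also have "\<dots> = (\<lambda>j. (p j, j)) ` {m..C (m - 1)}" using p_cut[OF assms] by simp
  finally show ?thesis by (simp add: sum.reindex inj_on_def)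
qed

lemma finPS: "finite PS" unfolding PS_eq by simp

lemma PS_lt: "(i,j) \<in> PS \<Longrightarrow> i < j \<and> j < n" unfolding PS_def by auto

end



lemma sorted_take_le:
  fixes xs :: "nat list"
  shows "sorted xs \<Longrightarrow> mset ys \<subseteq># mset xs \<Longrightarrow> sum_list (take (length ys) xs) \<le> sum_list ys"
proof (induction xs arbitrary: ys)
  case Nil then show ?case by simp
next
  case (Cons x xs)
  show ?case
  proof (cases ys)
    case Nil then show ?thesis by simp
  next
    case (Cons y0 ys0)
    define y where "y = (if x \<in> set ys then x else hd ys)"
    have yin: "y \<in> set ys" unfolding y_def using Cons by auto
    have xy: "x \<le> y"
    proof -
      have "y \<in> set (x # xs)" using yin Cons.prems(2) by (metis mset_subset_eqD set_mset_mset)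
      then show ?thesis using Cons.prems(1) by auto
    qed
    have sub: "mset (remove1 y ys) \<subseteq># mset xs"
    proof (cases "x \<in> set ys")
      case True
      then have "y = x" unfolding y_def by simp
      then show ?thesis using Cons.prems(2) by (simp add: subset_eq_diff_conv)
    next
      case False
      have "mset ys \<subseteq># mset xs"
        unfolding subseteq_mset_def
      proof
        fix z
        have "count (mset ys) z \<le> count (add_mset x (mset xs)) z"
          using Cons.prems(2) by (simp add: subseteq_mset_def)
        then show "count (mset ys) z \<le> count (mset xs) z" using False
        proof (cases "z = x")
          case True
          have "x \<notin># mset ys" using False by simp
          then have c0: "count (mset ys) x = 0" by (simp only: count_eq_zero_iff) simp
          show ?thesis using True c0 by (metis zero_le)
        qed simp
      qed
      then show ?thesis by (metis diff_subset_eq_self mset_remove1 subset_mset.trans)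
    qed
    have IH: "sum_list (take (length (remove1 y ys)) xs) \<le> sum_list (remove1 y ys)"
      using Cons.IH[OF _ sub] Cons.prems(1) by simp
    have len: "length ys = Suc (length (remove1 y ys))" using yin by (simp add: length_remove1) (metis Cons length_Cons length_pos_if_in_set Suc_pred)
    have me: "mset ys = add_mset y (mset (remove1 y ys))" using yin by (simp add: insert_DiffM)
    have "sum_mset (mset ys) = sum_mset (add_mset y (mset (remove1 y ys)))" by (simp only: me)
    then have "sum_list ys = y + sum_list (remove1 y ys)"
      by (simp only: sum_mset_sum_list sum_mset.add_mset)
    then show ?thesis using IH xy len by simp
  qed
qed

lemma sort_bij:
  fixes f :: "'a \<Rightarrow> real"
  assumes "finite V"
  shows "\<exists>\<sigma>. bij_betw \<sigma> {0..<card V} V \<and> (\<forall>i j. i \<le> j \<longrightarrow> j < card V \<longrightarrow> f (\<sigma> j) \<le> f (\<sigma> i))"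
proof -
  obtain l where l: "set l = V" "distinct l" using finite_distinct_list[OF assms] by blast
  define ys where "ys = sort_key (\<lambda>v. - f v) l"
  have ys: "set ys = V" "distinct ys" "length ys = card V"
    unfolding ys_def using l by (auto simp: distinct_card[symmetric])
  have s: "sorted (map (\<lambda>v. - f v) ys)" unfolding ys_def by simp
  have "bij_betw ((!) ys) {0..<card V} V"
    by (rule bij_betw_nth) (use ys in \<open>auto simp: atLeast0LessThan\<close>)
  moreover have "\<forall>i j. i \<le> j \<longrightarrow> j < card V \<longrightarrow> f (ys ! j) \<le> f (ys ! i)"
  proof (intro allI impI)
    fix i j assume "i \<le> j" "j < card V"
    then have "map (\<lambda>v. - f v) ys ! i \<le> map (\<lambda>v. - f v) ys ! j"
      using s ys(3) by (intro sorted_nth_mono) auto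
    then show "f (ys ! j) \<le> f (ys ! i)" using \<open>i \<le> j\<close> \<open>j < card V\<close> ys(3) by simp
  qed
  ultimately show ?thesis by blast
qed

context dseq begin

lemma take_tail: assumes "j \<le> n" shows "sum_list (take j ds) + (\<Sum>l\<in>{j..<n}. ds ! l) = 2 * (n - 1)"
proof -
  have "(\<Sum>l<n. ds ! l) = (\<Sum>l<j. ds ! l) + (\<Sum>l\<in>{j..<n}. ds ! l)"
    using assms by (metis atLeast0LessThan sum.atLeastLessThan_concat zero_le)
  moreover have "(\<Sum>l<n. ds ! l) = 2 * (n - 1)" using sm sum_take_nth[of n ds] len by simp
  ultimately show ?thesis using sum_take_nth[of j ds] len assms by simp
qed

lemma tail_ge: assumes "j \<le> kk" shows "(n - j) + (kk - j) \<le> (\<Sum>l\<in>{j..<n}. ds ! l)"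
proof -
  have "(\<Sum>l\<in>{j..<n}. (if l < kk then 2 else 1)) \<le> (\<Sum>l\<in>{j..<n}. ds ! l)"
    using big one by (intro sum_mono) auto
  moreover have "(\<Sum>l\<in>{j..<n}. (if l < kk then 2 else 1::nat)) = (\<Sum>l\<in>{j..<n}. 1 + (if l < kk then 1 else 0))"
    by (intro sum.cong) auto
  moreover have "\<dots> = (\<Sum>l\<in>{j..<n}. 1) + (\<Sum>l\<in>{j..<n}. if l < kk then 1 else 0::nat)"
    by (rule sum.distrib)
  moreover have "(\<Sum>l\<in>{j..<n}. if l < kk then 1 else 0::nat) = card {l\<in>{j..<n}. l < kk}"
    by (subst sum.inter_filter[symmetric]) auto
  moreover have "{l\<in>{j..<n}. l < kk} = {j..<kk}" using kk by auto
  ultimately show ?thesis by simp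
qed

end

lemma twb_dseq:
  assumes t: "tree_with_boundary V E"
  shows "dseq (deg_seq V E) (card V) (card (Defs.interior V E))"
    "deg_seq V E = sorted_list_of_multiset (image_mset (deg E) (mset_set (Defs.interior V E))) @ replicate (card (boundary V E)) 1"
proof -
  define I where "I = Defs.interior V E"
  define B where "B = boundary V E"
  define xs where "xs = sorted_list_of_multiset (image_mset (deg E) (mset_set I))"
  have tr: "is_tree V E" "V = B \<union> I" "B \<noteq> {}" "I \<noteq> {}" using t unfolding tree_with_boundary_def I_def B_def by auto
  have g: "graph V E" using tr unfolding is_tree_def by simp
  have fV: "finite V" using g unfolding graph_def by simp
  have fI: "finite I" "finite B" using tr fV by (auto intro: finite_subset)
  have disj: "B \<inter> I = {}" unfolding B_def I_def boundary_def Defs.interior_def by auto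
  have cV: "card V = card B + card I" using tr(2) disj fI card_Un_disjoint by metis
  obtain r where r: "r \<in> V" using tr by blast
  interpret tree V E r
    using tr r g unfolding is_tree_def by unfold_locales auto
  have ds: "deg_seq V E = xs @ replicate (card B) 1" unfolding deg_seq_def xs_def I_def B_def ..
  have lxs: "length xs = card I" unfolding xs_def
    by (metis mset_sorted_list_of_multiset size_image_mset size_mset size_mset_set)
  have sxs: "sorted xs" unfolding xs_def by simp
  have "set xs = deg E ` I" unfolding xs_def using fI by simp
  then have bxs: "\<And>x. x \<in> set xs \<Longrightarrow> 2 \<le> x"
    unfolding I_def Defs.interior_def by auto
  have "sum_list xs = (\<Sum>v\<in>I. deg E v)"
    unfolding xs_def by (metis mset_sorted_list_of_multiset sum_mset_sum_list sum_unfold_sum_mset)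
  moreover have "(\<Sum>v\<in>B. deg E v) = card B" unfolding B_def boundary_def by simp
  moreover have "(\<Sum>v\<in>V. deg E v) = (\<Sum>v\<in>B. deg E v) + (\<Sum>v\<in>I. deg E v)"
    using tr(2) disj fI by (simp add: sum.union_disjoint)
  ultimately have sl: "sum_list (deg_seq V E) = 2 * (card V - 1)" using sum_deg ds by (simp add: sum_list_replicate)
  show "deg_seq V E = sorted_list_of_multiset (image_mset (deg E) (mset_set (Defs.interior V E))) @ replicate (card (boundary V E)) 1"
    unfolding deg_seq_def ..
  show "dseq (deg_seq V E) (card V) (card (Defs.interior V E))"
  proof
    show "length (deg_seq V E) = card V" using ds lxs cV by simp
    fix i
    show "i < card (Defs.interior V E) \<Longrightarrow> 2 \<le> deg_seq V E ! i"
      using ds lxs bxs unfolding I_def[symmetric] by (simp add: nth_append)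
    show "card (Defs.interior V E) \<le> i \<Longrightarrow> i < card V \<Longrightarrow> deg_seq V E ! i = 1"
      using ds lxs cV unfolding I_def[symmetric] by (simp add: nth_append)
  next
    show "sorted (take (card (Defs.interior V E)) (deg_seq V E))"
      using ds lxs sxs unfolding I_def[symmetric] by simp
    show "sum_list (deg_seq V E) = 2 * (card V - 1)" by (rule sl)
    show "1 \<le> card (Defs.interior V E)" using tr fI unfolding I_def[symmetric] by (simp add: Suc_leI card_gt_0_iff)
    show "card (Defs.interior V E) < card V" using tr fI cV unfolding I_def[symmetric] B_def[symmetric] by (simp add: card_gt_0_iff)
  qed
qed



context dseq begin
lemma take_S: "1 \<le> m \<Longrightarrow> m \<le> n \<Longrightarrow> sum_list (take m ds) = S (m - 1)"
  unfolding S_def using sum_take_nth[of m ds] len by simp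

lemma S_C: "i < n \<Longrightarrow> S i = C i + i"
  unfolding C_def using S_ge[of i] by simp
end

lemma kk_le:
  assumes d: "dseq ds n k" and d': "dseq ds' n k'" and mj: "maj_le ds' ds"
  shows "k \<le> k'"
proof (rule ccontr)
  assume "\<not> k \<le> k'"
  then have lt: "k' < k" by simp
  interpret A: dseq ds n k by (rule d)
  interpret B: dseq ds' n k' by (rule d')
  have mm: "\<forall>r<n. sum_list (take (Suc r) ds') \<le> sum_list (take (Suc r) ds)"
    using mj A.len unfolding maj_le_def by simp
  have m: "sum_list (take k' ds') \<le> sum_list (take k' ds)" using mm[rule_format, of "k' - 1"] B.kk by simp
  have t1: "sum_list (take k' ds') + (n - k') = 2 * (n - 1)"
    using B.take_tail[of k'] B.kk B.one by simp
  have t2: "sum_list (take k' ds) + (\<Sum>l\<in>{k'..<n}. ds ! l) = 2 * (n - 1)"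
    using A.take_tail[of k'] B.kk by simp
  have t3: "(n - k') + (k - k') \<le> (\<Sum>l\<in>{k'..<n}. ds ! l)" using A.tail_ge[of k'] lt by simp
  show False using m t1 t2 t3 lt by linarith
qed

theorem lemma7:
  fixes V :: "'a set" and E :: "'a set set" and \<pi>' :: "nat list"
  assumes "tree_with_boundary V E"
    and "\<exists>(V' :: nat set) E'. tree_with_boundary V' E' \<and> card V' = card V \<and> deg_seq V' E' = \<pi>'"
    and "maj_le \<pi>' (deg_seq V E)"
  shows "\<exists>E'. SLO_tree V E' \<and> deg_seq V E' = \<pi>' \<and> lambda_D V E' \<le> lambda_D V E"
proof -
  note t = assms(1) and h2 = assms(2) and mj = assms(3)
  define n where "n = card V"
  define I where "I = Defs.interior V E"
  define k where "k = card I"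
  define \<pi> where "\<pi> = deg_seq V E"
  define xs where "xs = sorted_list_of_multiset (image_mset (deg E) (mset_set I))"
  have d\<pi>: "dseq \<pi> n k" using twb_dseq(1)[OF t] unfolding \<pi>_def n_def k_def I_def .
  have \<pi>form: "\<pi> = xs @ replicate (card (boundary V E)) 1"
    using twb_dseq(2)[OF t] unfolding \<pi>_def I_def xs_def .
  obtain V' :: "nat set" and E' where t': "tree_with_boundary V' E'" "card V' = n" "deg_seq V' E' = \<pi>'"
    using h2 n_def by blast
  define k' where "k' = card (Defs.interior V' E')"
  have d\<pi>': "dseq \<pi>' n k'" using twb_dseq(1)[OF t'(1)] t' unfolding k'_def by simp
  have kk': "k \<le> k'" using kk_le[OF d\<pi> d\<pi>'] mj unfolding \<pi>_def .
  interpret A: dseq \<pi> n k by (rule d\<pi>)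
  interpret B: dseq \<pi>' n k' by (rule d\<pi>')
  have tr: "is_tree V E" using t unfolding tree_with_boundary_def by simp
  have g: "graph V E" using tr unfolding is_tree_def by simp
  have Ine: "I \<noteq> {}" using t unfolding tree_with_boundary_def I_def by simp
  have IV: "I \<subseteq> V" unfolding I_def Defs.interior_def by auto
  have fV: "finite V" using g unfolding graph_def by simp
  have fI: "finite I" using IV fV finite_subset by blast
  have lxs: "length xs = k" unfolding xs_def k_def
    by (metis mset_sorted_list_of_multiset size_image_mset size_mset size_mset_set)
  interpret G: gsp V E by unfold_locales (rule g)
  have GI: "Defs.interior V E = I" unfolding I_def ..
  obtain x where x: "\<exists>v\<in>I. x v \<noteq> 0" "\<forall>v\<in>I. dirichlet_op V E x v = lambda_D V E * x v"
    using G.lambda_char(1)[OF Ine[unfolded I_def]] unfolding dirichlet_eigenvalues_def I_def by blast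
  define f where "f u = (if u \<in> I then \<bar>x u\<bar> else 0)" for u
  obtain \<sigma> where \<sigma>: "bij_betw \<sigma> {0..<n} V" "\<And>i j. i \<le> j \<Longrightarrow> j < n \<Longrightarrow> f (\<sigma> j) \<le> f (\<sigma> i)"
    using sort_bij[OF fV, of f] unfolding n_def by blast
  define a where "a j = f (\<sigma> j)" for j
  have anti: "\<And>i j. i \<le> j \<Longrightarrow> j < n \<Longrightarrow> a j \<le> a i" using \<sigma>(2) unfolding a_def by blast
  have fnn: "\<And>u. 0 \<le> f u" unfolding f_def by simp
  have fz: "\<And>u. u \<notin> I \<Longrightarrow> f u = 0" unfolding f_def by simp
  have \<sigma>inj: "inj_on \<sigma> {0..<n}" using bij_betw_imp_inj_on[OF \<sigma>(1)] .
  have \<sigma>img: "\<sigma> ` {0..<n} = V" using bij_betw_imp_surj_on[OF \<sigma>(1)] .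
  have posI: "\<And>j. j < n \<Longrightarrow> 0 < a j \<Longrightarrow> \<sigma> ` {0..j} \<subseteq> I"
  proof -
    fix j assume j: "j < n" "0 < a j"
    show "\<sigma> ` {0..j} \<subseteq> I"
    proof
      fix v assume "v \<in> \<sigma> ` {0..j}"
      then obtain i where i: "i \<le> j" "v = \<sigma> i" by auto
      have "0 < a i" using anti[OF i(1) j(1)] j(2) by simp
      then show "v \<in> I" using fz i unfolding a_def by force
    qed
  qed
  have azero: "\<And>j. k \<le> j \<Longrightarrow> j < n \<Longrightarrow> a j = 0"
  proof (rule ccontr)
    fix j assume j: "k \<le> j" "j < n" "a j \<noteq> 0"
    then have "0 < a j" using fnn unfolding a_def by (simp add: less_le)
    then have "\<sigma> ` {0..j} \<subseteq> I" using posI j by simp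
    then have "card (\<sigma> ` {0..j}) \<le> card I" using fI by (intro card_mono) auto
    moreover have "card (\<sigma> ` {0..j}) = Suc j"
    proof -
      have "{0..j} \<subseteq> {0..<n}" using j by auto
      then have "inj_on \<sigma> {0..j}" by (rule inj_on_subset[OF \<sigma>inj])
      then show ?thesis by (simp add: card_image)
    qed
    ultimately show False using j unfolding k_def by simp
  qed
  interpret H: greedy \<pi>' n k' V \<sigma> by unfold_locales (rule \<sigma>(1))
  interpret Hs: gsp V H.Es by unfold_locales (rule H.graph)
  have IH: "Defs.interior V H.Es = \<sigma> ` {0..<k'}" by (rule H.interior_eq)
  have fzH: "\<And>u. u \<in> V \<Longrightarrow> u \<notin> Defs.interior V H.Es \<Longrightarrow> f u = 0"
  proof -
    fix u assume u: "u \<in> V" "u \<notin> Defs.interior V H.Es"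
    then obtain j where j: "j < n" "u = \<sigma> j" using \<sigma>img by auto
    have "\<not> j < k'" using u(2) j unfolding IH by auto
    then show "f u = 0" using azero[of j] kk' j unfolding a_def by simp
  qed
  have IHne: "Defs.interior V H.Es \<noteq> {}" unfolding IH using B.kk by auto
  have nrmG: "G.nrm f = (\<Sum>v\<in>V. (f v)\<^sup>2)" unfolding G.nrm_def GI
    using fz IV fV by (intro sum.mono_neutral_left) auto
  have nrmH: "Hs.nrm f = (\<Sum>v\<in>V. (f v)\<^sup>2)" unfolding Hs.nrm_def
    using fzH fV by (intro sum.mono_neutral_left) (auto simp: Defs.interior_def)
  have nrmx: "G.nrm f = G.nrm x" unfolding G.nrm_def GI f_def by (intro sum.cong refl) simp
  have npos: "G.nrm x > 0" using G.nrm_pos x(1) unfolding GI by blast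
  define x' where "x' u = (if u \<in> I then x u else 0)" for u
  have QFx: "G.QF x = lambda_D V E * G.nrm x" by (rule G.QF_eig) (use x(2) GI in simp)
  have QFx': "G.QF x' = G.QF x" by (rule G.QF_cong) (simp add: x'_def GI)
  define Ad where "Ad = Sigma V (\<lambda>v. {w\<in>V. adj E v w})"
  have Qf: "2 * G.QF f = (\<Sum>(v,w)\<in>Ad. (f v - f w)\<^sup>2)" unfolding Ad_def
    by (rule G.QF_pairs) (use fz GI in auto)
  have Qx': "2 * G.QF x' = (\<Sum>(v,w)\<in>Ad. (x' v - x' w)\<^sup>2)" unfolding Ad_def
    by (rule G.QF_pairs) (simp add: x'_def GI)
  have "(\<Sum>(v,w)\<in>Ad. (f v - f w)\<^sup>2) \<le> (\<Sum>(v,w)\<in>Ad. (x' v - x' w)\<^sup>2)"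
  proof (rule sum_mono)
    fix q assume "q \<in> Ad"
    obtain v w where q: "q = (v,w)" by (cases q)
    have fe: "f v = \<bar>x' v\<bar>" "f w = \<bar>x' w\<bar>" unfolding f_def x'_def by auto
    have "\<bar>\<bar>x' v\<bar> - \<bar>x' w\<bar>\<bar> \<le> \<bar>x' v - x' w\<bar>" by (rule abs_triangle_ineq3)
    then have "(\<bar>x' v\<bar> - \<bar>x' w\<bar>)\<^sup>2 \<le> (x' v - x' w)\<^sup>2" by (simp add: abs_le_square_iff)
    then show "(case q of (v, w) \<Rightarrow> (f v - f w)\<^sup>2) \<le> (case q of (v, w) \<Rightarrow> (x' v - x' w)\<^sup>2)"
      using q fe by simp
  qed
  then have QFG: "G.QF f \<le> lambda_D V E * G.nrm f" using Qf Qx' QFx' QFx nrmx by simp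
  have irrG: "\<And>v. \<not> adj E v v" using adj_in_V[OF g] by blast
  have irrH: "\<And>v. \<not> adj H.Es v v" using adj_in_V[OF H.graph] by blast
  define PG where "PG = {(i,j). i < j \<and> j < n \<and> adj E (\<sigma> i) (\<sigma> j)}"
  have posG: "G.QF f = (\<Sum>(i,j)\<in>PG. (a i - a j)\<^sup>2)"
    using Qf pairs_pos[OF \<sigma>(1) irrG, of "\<lambda>v w. (f v - f w)\<^sup>2"] unfolding Ad_def PG_def a_def
    by (simp add: power2_commute)
  have QfH: "2 * Hs.QF f = (\<Sum>(v,w)\<in>Sigma V (\<lambda>v. {w\<in>V. adj H.Es v w}). (f v - f w)\<^sup>2)"
    by (rule Hs.QF_pairs) (use fzH in auto)
  have posH: "Hs.QF f = (\<Sum>(i,j)\<in>H.PS. (a i - a j)\<^sup>2)"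
    using QfH pairs_pos[OF \<sigma>(1) irrH, of "\<lambda>v w. (f v - f w)\<^sup>2"] unfolding H.PS_def a_def
    by (simp add: power2_commute)
  have finPG: "finite PG" unfolding PG_def by (rule finite_subset[of _ "{0..<n} \<times> {0..<n}"]) auto
  have PGlt: "\<And>i j. (i,j) \<in> PG \<Longrightarrow> i < j \<and> j < n" unfolding PG_def by auto
  have r0: "\<sigma> 0 \<in> V" using \<sigma>img B.kk by auto
  interpret TG: tree V E "\<sigma> 0"
    using tr r0 g unfolding is_tree_def by unfold_locales auto
  have cut: "(\<Sum>q\<in>cutP H.PS m. wt a m (snd q)) \<le> (\<Sum>q\<in>cutP PG m. wt a m (snd q))"
    if m: "1 \<le> m" "m < n" "a m < a (m - 1)" for m
  proof -
    have am: "0 < a (m - 1)" using m(3) fnn[of "\<sigma> m"] unfolding a_def by simp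
    define T where "T = \<sigma> ` {0..<m}"
    have "{0..m - 1} = {0..<m}" using m by auto
    then have TI: "T \<subseteq> I" using posI[of "m - 1"] am m unfolding T_def by simp
    have cT: "card T = m"
    proof -
      have "{0..<m} \<subseteq> {0..<n}" using m by auto
      then have "inj_on \<sigma> {0..<m}" by (rule inj_on_subset[OF \<sigma>inj])
      then show ?thesis unfolding T_def by (simp add: card_image)
    qed
    have mk: "m \<le> k" using card_mono[OF fI TI] cT unfolding k_def by simp
    define Nb where "Nb = {y \<in> V - T. \<exists>t\<in>T. adj E t y}"
    have fb: "(\<Sum>v\<in>T. deg E v) + 2 \<le> 2 * card T + card Nb"
      unfolding Nb_def by (rule TG.forest_bound) (use TI IV m in \<open>auto simp: T_def\<close>)
    define ys where "ys = sorted_list_of_multiset (image_mset (deg E) (mset_set T))"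
    have fT: "finite T" unfolding T_def by simp
    have "mset ys \<subseteq># mset xs" unfolding ys_def xs_def
      using TI fT fI by (simp add: image_mset_subseteq_mono)
    moreover have "sorted xs" unfolding xs_def by simp
    ultimately have "sum_list (take (length ys) xs) \<le> sum_list ys" using sorted_take_le by blast
    moreover have "length ys = m" unfolding ys_def using cT
      by (metis mset_sorted_list_of_multiset size_image_mset size_mset size_mset_set)
    moreover have "sum_list ys = (\<Sum>v\<in>T. deg E v)" unfolding ys_def
      by (metis mset_sorted_list_of_multiset sum_mset_sum_list sum_unfold_sum_mset)
    moreover have "take m \<pi> = take m xs" using \<pi>form mk lxs by simp
    ultimately have dsum: "sum_list (take m \<pi>) \<le> (\<Sum>v\<in>T. deg E v)" by simp
    have mm: "\<forall>r<n. sum_list (take (Suc r) \<pi>') \<le> sum_list (take (Suc r) \<pi>)"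
      using mj A.len unfolding maj_le_def \<pi>_def[symmetric] by simp
    have mjm: "sum_list (take m \<pi>') \<le> sum_list (take m \<pi>)" using mm[rule_format, of "m - 1"] m by simp
    have "sum_list (take m \<pi>') = B.C (m - 1) + (m - 1)"
      using B.take_S[of m] B.S_C[of "m - 1"] m by simp
    then have Nbig: "B.C (m - 1) + 1 - m \<le> card Nb" using dsum mjm fb cT by linarith
    have "Nb = \<sigma> ` (snd ` cutP PG m)"
    proof
      show "Nb \<subseteq> \<sigma> ` (snd ` cutP PG m)"
      proof
        fix y assume "y \<in> Nb"
        then obtain t where y: "y \<in> V" "y \<notin> T" "t \<in> T" "adj E t y" unfolding Nb_def by auto
        obtain j where j: "j < n" "y = \<sigma> j" using y(1) \<sigma>img by auto
        obtain i where i: "i < m" "t = \<sigma> i" using y(3) unfolding T_def by auto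
        have "m \<le> j" using y(2) j unfolding T_def by auto
        then have "(i,j) \<in> cutP PG m" unfolding cutP_def PG_def using i j y(4) by auto
        then show "y \<in> \<sigma> ` (snd ` cutP PG m)" using j by force
      qed
    next
      show "\<sigma> ` (snd ` cutP PG m) \<subseteq> Nb"
      proof
        fix y assume "y \<in> \<sigma> ` (snd ` cutP PG m)"
        then obtain i j where ij: "y = \<sigma> j" "i < m" "m \<le> j" "j < n" "adj E (\<sigma> i) (\<sigma> j)"
          unfolding cutP_def PG_def by auto
        have "y \<notin> T"
        proof
          assume "y \<in> T"
          then obtain l where "l < m" "y = \<sigma> l" unfolding T_def by auto
          then have "l = j" using ij \<sigma>inj m unfolding inj_on_def by auto
          then show False using ij \<open>l < m\<close> by simp
        qed
        moreover have "y \<in> V" using ij \<sigma>img by auto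
        moreover have "\<sigma> i \<in> T" using ij unfolding T_def by auto
        ultimately show "y \<in> Nb" unfolding Nb_def using ij by auto
      qed
    qed
    moreover have "inj_on \<sigma> (snd ` cutP PG m)"
      by (rule inj_on_subset[OF \<sigma>inj]) (auto simp: cutP_def PG_def)
    ultimately have cNb: "card Nb = card (snd ` cutP PG m)" by (simp add: card_image)
    define N where "N = B.C (m - 1) + 1 - m"
    have Cm: "m \<le> B.C (m - 1)" using B.C_big m by simp
    have "{m..<m+N} = {m..B.C (m - 1)}" unfolding N_def using Cm by auto
    moreover have "(\<Sum>j\<in>{m..<m+N}. wt a m j) \<le> (\<Sum>q\<in>cutP PG m. wt a m (snd q))"
    proof (rule cut_lower[OF finPG PGlt anti m(1,2)])
      show "N \<le> card (snd ` cutP PG m)" using Nbig cNb unfolding N_def by simp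
    qed
    ultimately show ?thesis using H.PS_cut[OF m(1,2), of a] by simp
  qed
  have cmp: "(\<Sum>(i,j)\<in>H.PS. (a i - a j)\<^sup>2) \<le> (\<Sum>(i,j)\<in>PG. (a i - a j)\<^sup>2)"
    by (rule compare[OF finPG PGlt H.finPS H.PS_lt anti cut])
  have "lambda_D V H.Es * Hs.nrm f \<le> Hs.QF f" by (rule Hs.lambda_char(2)[OF IHne])
  also have "\<dots> \<le> G.QF f" using posH posG cmp by simp
  also have "\<dots> \<le> lambda_D V E * G.nrm f" by (rule QFG)
  finally have "lambda_D V H.Es * G.nrm f \<le> lambda_D V E * G.nrm f" using nrmG nrmH by simp
  moreover have "G.nrm f > 0" using npos nrmx by simp
  ultimately have "lambda_D V H.Es \<le> lambda_D V E" by simp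
  then show ?thesis using H.slo H.degseq by blast
qed


end
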